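(* Let $G$ be a finite nilpotent group and $H$ an arbitrary finite group. If $P_e(G)\cong P_e(H)$, then $H$ is nilpotent.
   Context: All groups are finite. For a group $X$, the enhanced power graph $P_e(X)$ is the simple graph with vertex set $X$ in which two distinct vertices $x,y$ are adjacent if and only if the subgroup $\langle x,y\rangle$ is cyclic. *)

theory Defs
  imports "HOL-Algebra.Algebra"
begin

definition commutator_subgroup :: "('a, 'b) monoid_scheme \<Rightarrow> 'a set \<Rightarrow> 'a set \<Rightarrow> 'a set" where
  "commutator_subgroup G A B =
     generate G {a \<otimes>\<^bsub>G\<^esub> b \<otimes>\<^bsub>G\<^esub> inv\<^bsub>G\<^esub> a \<otimes>\<^bsub>G\<^esub> inv\<^bsub>G\<^esub> b | a b. a \<in> A \<and> b \<in> B}"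

fun lower_central :: "('a, 'b) monoid_scheme \<Rightarrow> nat \<Rightarrow> 'a set" where
  "lower_central G 0 = carrier G"
| "lower_central G (Suc n) = commutator_subgroup G (lower_central G n) (carrier G)"

definition nilpotent_group :: "('a, 'b) monoid_scheme \<Rightarrow> bool" where
  "nilpotent_group G \<longleftrightarrow> group G \<and> (\<exists>n. lower_central G n = {\<one>\<^bsub>G\<^esub>})"

definition epg_adj :: "('a, 'b) monoid_scheme \<Rightarrow> 'a \<Rightarrow> 'a \<Rightarrow> bool" where
  "epg_adj G x y \<longleftrightarrow> x \<noteq> y \<and> cyclic_group (subgroup_generated G {x, y})"

definition epg_iso :: "('a, 'b) monoid_scheme \<Rightarrow> ('c, 'd) monoid_scheme \<Rightarrow> bool" where
  "epg_iso G H \<longleftrightarrow> (\<exists>f. bij_betw f (carrier G) (carrier H) \<and>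
      (\<forall>x\<in>carrier G. \<forall>y\<in>carrier G. epg_adj G x y \<longleftrightarrow> epg_adj H (f x) (f y)))"

end

theory Submission
  imports Defs
begin

context group begin

lemma sub_nat_pow_closed:
  assumes "subgroup H G" "h \<in> H" shows "h [^] (n::nat) \<in> H"
proof (induction n)
  case 0 then show ?case using assms by (simp add: subgroup.one_closed)
next
  case (Suc n)
  have "h \<in> carrier G" using subgroup.mem_carrier[OF assms] .
  then show ?case using Suc assms by (simp add: subgroup.m_closed)
qed

lemma gen1_nat:
  assumes fin: "finite (carrier G)" and c: "c \<in> carrier G"
  shows "generate G {c} = {c [^] (k::nat) | k. True}"
proof -
  have "ord c \<noteq> 0" using ord_ge_1[OF fin c] by simp
  thus ?thesis using generate_pow_nat[OF c] by simp
qed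

lemma sub_cyclic:
  assumes fin: "finite (carrier G)" and c: "c \<in> carrier G"
    and D: "subgroup D G" "D \<subseteq> generate G {c}"
  shows "\<exists>d. 0 < d \<and> d dvd ord c \<and> D = generate G {c [^] d}"
proof -
  define n where "n = ord c"
  have n0: "n > 0" using ord_ge_1[OF fin c] n_def by simp
  have cn: "c [^] n \<in> D" using n_def c subgroup.one_closed[OF D(1)] by simp
  define d where "d = (LEAST k::nat. 0 < k \<and> c [^] k \<in> D)"
  have dP: "0 < d \<and> c [^] d \<in> D"
    unfolding d_def using LeastI[of "\<lambda>k::nat. 0 < k \<and> c [^] k \<in> D" n] n0 cn by blast
  have dmin: "\<And>k. 0 < k \<Longrightarrow> c [^] k \<in> D \<Longrightarrow> d \<le> k"
    unfolding d_def by (rule Least_le) auto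
  have key: "c [^] k \<in> D \<longleftrightarrow> d dvd k" for k :: nat
  proof
    assume ck: "c [^] k \<in> D"
    define q r where "q = k div d" and "r = k mod d"
    have k: "k = d * q + r" using q_def r_def by simp
    have "c [^] k = (c [^] d) [^] q \<otimes> c [^] r"
      by (simp add: k c nat_pow_mult nat_pow_pow)
    hence "c [^] r = inv ((c [^] d) [^] q) \<otimes> c [^] k"
      using c by (simp add: m_assoc[symmetric] nat_pow_closed)
    moreover have "(c [^] d) [^] q \<in> D"
      using dP D(1) by (simp add: sub_nat_pow_closed)
    ultimately have "c [^] r \<in> D" using ck D(1)
      by (simp add: subgroup.m_closed subgroup.m_inv_closed)
    moreover have "r < d" using dP r_def by simp
    ultimately have "r = 0" using dmin by (meson leD neq0_conv)
    thus "d dvd k" using r_def by auto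
  next
    assume "d dvd k"
    then obtain q where "k = d * q" by auto
    hence "c [^] k = (c [^] d) [^] q" using c by (simp add: nat_pow_pow)
    thus "c [^] k \<in> D" using dP D(1) sub_nat_pow_closed by simp
  qed
  have "d dvd n" using key cn by simp
  moreover have "D = generate G {c [^] d}"
  proof
    show "generate G {c [^] d} \<subseteq> D"
      using dP D(1) by (simp add: generate_subgroup_incl)
  next
    show "D \<subseteq> generate G {c [^] d}"
    proof
      fix y assume y: "y \<in> D"
      then obtain k where k: "y = c [^] (k::nat)" using D(2) gen1_nat[OF fin c] by auto
      then obtain q where "k = d * q" using key y by auto
      hence "y = (c [^] d) [^] q" using k c by (simp add: nat_pow_pow)
      thus "y \<in> generate G {c [^] d}" using gen1_nat[OF fin] c by auto
    qed
  qed
  ultimately show ?thesis using dP n_def by blast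
qed

lemma sub_cyclic_eq:
  assumes fin: "finite (carrier G)" and c: "c \<in> carrier G"
    and D: "subgroup D G" "D \<subseteq> generate G {c}"
  shows "D = {y \<in> generate G {c}. y [^] card D = \<one>}"
proof -
  obtain d where d: "0 < d" "d dvd ord c" "D = generate G {c [^] d}"
    using sub_cyclic[OF assms] by blast
  define n where "n = ord c"
  have n0: "n > 0" using ord_ge_1[OF fin c] n_def by simp
  have cd: "c [^] d \<in> carrier G" using c by simp
  have cardD: "card D = n div d"
    using d generate_pow_card[OF cd] ord_pow[OF c d(2)] n_def by (metis gr_implies_not0)
  have nd: "d * (n div d) = n" using d n_def by simp
  show ?thesis
  proof
    show "D \<subseteq> {y \<in> generate G {c}. y [^] card D = \<one>}"
    proof
      fix y assume y: "y \<in> D"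
      then obtain q where q: "y = (c [^] d) [^] (q::nat)" using d gen1_nat[OF fin cd] by auto
      have "y [^] card D = c [^] (d * q * (n div d))"
        using q c cardD by (simp add: nat_pow_pow)
      also have "d * q * (n div d) = n * q" using nd by (metis mult.commute mult.assoc)
      also have "c [^] (n * q) = (c [^] n) [^] q" using c by (simp add: nat_pow_pow)
      also have "\<dots> = \<one>" using c n_def by simp
      finally show "y \<in> {y \<in> generate G {c}. y [^] card D = \<one>}" using y D by auto
    qed
  next
    show "{y \<in> generate G {c}. y [^] card D = \<one>} \<subseteq> D"
    proof
      fix y assume y: "y \<in> {y \<in> generate G {c}. y [^] card D = \<one>}"
      then obtain k where k: "y = c [^] (k::nat)" using gen1_nat[OF fin c] by auto
      have "c [^] (k * (n div d)) = \<one>" using y k c cardD by (simp add: nat_pow_pow)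
      hence "n dvd k * (n div d)" using pow_eq_id[OF c] n_def by simp
      hence "d * (n div d) dvd k * (n div d)" using nd by simp
      hence "d dvd k" proof -
        have "n div d > 0" using n0 nd by (metis gr0I mult_zero_right)
        thus ?thesis using \<open>d * (n div d) dvd k * (n div d)\<close> by (simp add: dvd_mult_cancel2)
      qed
      then obtain q where "k = d * q" by auto
      hence "y = (c [^] d) [^] q" using k c by (simp add: nat_pow_pow)
      thus "y \<in> D" using d gen1_nat[OF fin cd] by auto
    qed
  qed
qed

end


definition nbg :: "('a, 'b) monoid_scheme \<Rightarrow> 'a \<Rightarrow> 'a set" where
  "nbg G x = {y \<in> carrier G. y = x \<or> epg_adj G x y}"

definition Igr :: "('a, 'b) monoid_scheme \<Rightarrow> 'a \<Rightarrow> 'a set" where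
  "Igr G x = {y \<in> carrier G. nbg G x \<subseteq> nbg G y}"

definition maxcyc :: "('a, 'b) monoid_scheme \<Rightarrow> 'a \<Rightarrow> bool" where
  "maxcyc G g \<longleftrightarrow> g \<in> carrier G \<and>
     (\<forall>h\<in>carrier G. generate G {g} \<subseteq> generate G {h} \<longrightarrow> generate G {h} = generate G {g})"

lemma maxcycD: "maxcyc G g \<Longrightarrow> g \<in> carrier G"
  "maxcyc G g \<Longrightarrow> h \<in> carrier G \<Longrightarrow> generate G {g} \<subseteq> generate G {h} \<Longrightarrow> generate G {h} = generate G {g}"
  unfolding maxcyc_def by blast+

lemma IgrD: "y \<in> Igr G x \<Longrightarrow> y \<in> carrier G" "y \<in> Igr G x \<Longrightarrow> nbg G x \<subseteq> nbg G y"
  unfolding Igr_def by blast+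

context group begin

lemma cyc_sg_iff:
  assumes fin: "finite (carrier G)" and x: "x \<in> carrier G" and y: "y \<in> carrier G"
  shows "cyclic_group (subgroup_generated G {x, y}) \<longleftrightarrow>
         (\<exists>c\<in>carrier G. x \<in> generate G {c} \<and> y \<in> generate G {c})"
proof
  assume "cyclic_group (subgroup_generated G {x, y})"
  then obtain g where g: "g \<in> carrier (subgroup_generated G {x, y})"
     and eq: "subgroup_generated (subgroup_generated G {x, y}) {g} = subgroup_generated G {x, y}"
    unfolding cyclic_group_def by blast
  have xy: "carrier G \<inter> {x, y} = {x, y}" using x y by auto
  have cs: "carrier (subgroup_generated G {x, y}) = generate G {x, y}"
    using xy by (simp add: carrier_subgroup_generated)
  have sg: "subgroup (generate G {x, y}) G" using x y by (simp add: generate_is_subgroup)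
  have "carrier (subgroup_generated (subgroup_generated G {x, y}) {g})
        = generate (subgroup_generated G {x, y}) {g}"
    using g by (simp add: carrier_subgroup_generated Int_absorb1)
  also have "\<dots> = generate (G\<lparr>carrier := generate G {x, y}\<rparr>) {g}"
    using xy by (simp add: subgroup_generated_def)
  also have "\<dots> = generate G {g}"
    using g cs sg by (intro generate_consistent) auto
  finally have "generate G {g} = generate G {x, y}" using eq cs by simp
  moreover have "g \<in> carrier G" using g cs generate_incl[of "{x,y}"] x y by auto
  ultimately show "\<exists>c\<in>carrier G. x \<in> generate G {c} \<and> y \<in> generate G {c}"
    by (metis generate.incl insertI1 insert_commute)
next
  assume "\<exists>c\<in>carrier G. x \<in> generate G {c} \<and> y \<in> generate G {c}"
  then obtain c where c: "c \<in> carrier G" "x \<in> generate G {c}" "y \<in> generate G {c}" by blast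
  have "generate G {x, y} \<subseteq> generate G {c}"
    using c by (intro generate_subgroup_incl) (auto intro: generate_is_subgroup)
  moreover have "subgroup (generate G {x, y}) G" using x y generate_is_subgroup by auto
  ultimately obtain d :: nat where d: "generate G {x, y} = generate G {c [^] d}"
    using sub_cyclic[OF fin c(1), of "generate G {x,y}"] by blast
  have xy: "carrier G \<inter> {x, y} = {x, y}" using x y by auto
  have cd: "carrier G \<inter> {c [^] d} = {c [^] d}" using c by auto
  have "subgroup_generated G {x, y} = subgroup_generated G {c [^] d}"
    unfolding subgroup_generated_def using xy cd d by simp
  thus "cyclic_group (subgroup_generated G {x, y})" using cyclic_group_generated by simp
qed

lemma nbg_iff:
  assumes fin: "finite (carrier G)" and x: "x \<in> carrier G"
  shows "nbg G x = {y \<in> carrier G. \<exists>c\<in>carrier G. x \<in> generate G {c} \<and> y \<in> generate G {c}}"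
proof -
  have "(y = x \<or> epg_adj G x y) \<longleftrightarrow> (\<exists>c\<in>carrier G. x \<in> generate G {c} \<and> y \<in> generate G {c})"
    if y: "y \<in> carrier G" for y
  proof (cases "y = x")
    case True
    then show ?thesis using x by (auto intro: generate.incl)
  next
    case False
    then show ?thesis using cyc_sg_iff[OF fin x y] by (simp add: epg_adj_def)
  qed
  thus ?thesis unfolding nbg_def by auto
qed

lemma gen_sub_gen:
  assumes "c \<in> carrier G" "x \<in> generate G {c}"
  shows "generate G {x} \<subseteq> generate G {c}"
  using assms by (intro generate_subgroup_incl) (auto intro: generate_is_subgroup)

lemma exists_maxcyc:
  assumes fin: "finite (carrier G)" and c: "c \<in> carrier G"
  shows "\<exists>g. maxcyc G g \<and> generate G {c} \<subseteq> generate G {g}"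
proof -
  let ?P = "\<lambda>g. g \<in> carrier G \<and> generate G {c} \<subseteq> generate G {g}"
  have "\<forall>y. ?P y \<longrightarrow> card (generate G {y}) < card (carrier G) + 1"
    using fin by (auto intro!: le_imp_less_Suc card_mono generate_incl)
  then obtain g where g: "?P g" and gm: "\<forall>y. ?P y \<longrightarrow> card (generate G {y}) \<le> card (generate G {g})"
    using Lattices_Big.ex_has_greatest_nat[of ?P c "\<lambda>g. card (generate G {g})"] c by blast
  have "maxcyc G g"
    unfolding maxcyc_def
  proof (intro conjI ballI impI)
    show "g \<in> carrier G" using g by simp
    fix h assume h: "h \<in> carrier G" "generate G {g} \<subseteq> generate G {h}"
    hence "?P h" using g by auto
    hence "card (generate G {h}) \<le> card (generate G {g})" using gm by blast
    moreover have "finite (generate G {h})" using fin h generate_incl[of "{h}"] finite_subset by auto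
    moreover have "card (generate G {g}) \<le> card (generate G {h})"
      using card_mono[OF \<open>finite (generate G {h})\<close> h(2)] .
    ultimately have "card (generate G {g}) = card (generate G {h})" by simp
    hence "generate G {g} = generate G {h}"
      using card_subset_eq[OF \<open>finite (generate G {h})\<close> h(2)] by simp
    thus "generate G {h} = generate G {g}" by simp
  qed
  thus ?thesis using g by blast
qed

lemma Ig_in_max:
  assumes fin: "finite (carrier G)" and x: "x \<in> carrier G"
    and g: "maxcyc G g" and xg: "x \<in> generate G {g}"
  shows "Igr G x \<subseteq> generate G {g}"
proof
  fix y assume y: "y \<in> Igr G x"
  have gc: "g \<in> carrier G" using maxcycD(1)[OF g(1)] .
  have "g \<in> nbg G x" using nbg_iff[OF fin x] gc xg by (auto intro: generate.incl)
  hence "g \<in> nbg G y" using IgrD(2)[OF y] by blast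
  then obtain c where c: "c \<in> carrier G" "y \<in> generate G {c}" "g \<in> generate G {c}"
    using nbg_iff[OF fin IgrD(1)[OF y]] by auto
  have "generate G {g} \<subseteq> generate G {c}" using gen_sub_gen c by blast
  hence "generate G {c} = generate G {g}" using maxcycD(2)[OF g] c by blast
  thus "y \<in> generate G {g}" using c by simp
qed

lemma Ig_subgroup:
  assumes fin: "finite (carrier G)" and x: "x \<in> carrier G"
  shows "subgroup (Igr G x) G"
proof -
  have key: "w \<in> nbg G z" if z: "\<And>g. maxcyc G g \<Longrightarrow> x \<in> generate G {g} \<Longrightarrow> z \<in> generate G {g}"
     and zc: "z \<in> carrier G" and w: "w \<in> nbg G x" for z w
  proof -
    obtain c where c: "c \<in> carrier G" "x \<in> generate G {c}" "w \<in> generate G {c}"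
      using w nbg_iff[OF fin x] by auto
    obtain g where g: "maxcyc G g" "generate G {c} \<subseteq> generate G {g}"
      using exists_maxcyc[OF fin c(1)] by blast
    have zg: "z \<in> generate G {g}" using z g c by blast
    have wg: "w \<in> generate G {g}" using g c by blast
    have wc: "w \<in> carrier G" using w unfolding nbg_def by blast
    show ?thesis unfolding nbg_iff[OF fin zc] using wc zg wg maxcycD(1)[OF g(1)] by blast
  qed
  have inmax: "y \<in> generate G {g}" if "y \<in> Igr G x" "maxcyc G g" "x \<in> generate G {g}" for y g
    using Ig_in_max[OF fin x] that by blast
  show ?thesis
  proof (rule subgroupI)
    show "Igr G x \<subseteq> carrier G" unfolding Igr_def by auto
    show "Igr G x \<noteq> {}" using x unfolding Igr_def by auto
  next
    fix a assume a: "a \<in> Igr G x"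
    have ac: "a \<in> carrier G" using IgrD(1)[OF a] .
    have "w \<in> nbg G (inv a)" if "w \<in> nbg G x" for w
    proof (rule key[OF _ _ that])
      fix g assume g: "maxcyc G g" "x \<in> generate G {g}"
      have "a \<in> generate G {g}" using inmax a g by blast
      thus "inv a \<in> generate G {g}" using maxcycD(1)[OF g(1)] generate_m_inv_closed[of "{g}" a] by auto
    qed (use ac in simp)
    thus "inv a \<in> Igr G x" using ac unfolding Igr_def by auto
  next
    fix a b assume a: "a \<in> Igr G x" and b: "b \<in> Igr G x"
    have ac: "a \<in> carrier G" "b \<in> carrier G" using IgrD(1)[OF a] IgrD(1)[OF b] by auto
    have "w \<in> nbg G (a \<otimes> b)" if "w \<in> nbg G x" for w
    proof (rule key[OF _ _ that])
      fix g assume g: "maxcyc G g" "x \<in> generate G {g}"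
      have "a \<in> generate G {g}" "b \<in> generate G {g}" using inmax a b g by blast+
      thus "a \<otimes> b \<in> generate G {g}" by (rule generate.eng)
    qed (use ac in simp)
    thus "a \<otimes> b \<in> Igr G x" using ac unfolding Igr_def by auto
  qed
qed

lemma Ig_cyclic:
  assumes fin: "finite (carrier G)" and x: "x \<in> carrier G"
  shows "\<exists>c\<in>carrier G. Igr G x = generate G {c}"
proof -
  obtain g where g: "maxcyc G g" "generate G {x} \<subseteq> generate G {g}"
    using exists_maxcyc[OF fin x] by blast
  have gc: "g \<in> carrier G" using maxcycD(1)[OF g(1)] .
  have "x \<in> generate G {g}" using g(2) generate.incl[of x "{x}" G] by blast
  hence "Igr G x \<subseteq> generate G {g}" using Ig_in_max[OF fin x g(1)] by blast
  then obtain d :: nat where d: "Igr G x = generate G {g [^] d}"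
    using sub_cyclic[OF fin gc Ig_subgroup[OF fin x]] by blast
  have "g [^] d \<in> carrier G" using gc by simp
  thus ?thesis using d by blast
qed

lemma Ig_self: "x \<in> carrier G \<Longrightarrow> x \<in> Igr G x"
  unfolding Igr_def by auto

lemma Ig_trans: "y \<in> Igr G x \<Longrightarrow> Igr G y \<subseteq> Igr G x"
  unfolding Igr_def by auto

end

lemma cyc_bij:
  assumes G: "group G" and H: "group H" and fG: "finite (carrier G)" and fH: "finite (carrier H)"
    and c: "c \<in> carrier G" and c': "c' \<in> carrier H" and o: "group.ord G c = group.ord H c'"
  shows "\<exists>\<psi>. bij_betw \<psi> (generate G {c}) (generate H {c'}) \<and>
      (\<forall>y\<in>generate G {c}. \<forall>m::nat. (\<psi> y [^]\<^bsub>H\<^esub> m = \<one>\<^bsub>H\<^esub>) \<longleftrightarrow> (y [^]\<^bsub>G\<^esub> m = \<one>\<^bsub>G\<^esub>))"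
proof -
  interpret G: group G by fact
  interpret H: group H by fact
  define n where "n = G.ord c"
  have n0: "n > 0" using G.ord_ge_1[OF fG c] n_def by simp
  have n': "H.ord c' = n" using o n_def by simp
  have img: "generate G {c} = (\<lambda>k. c [^]\<^bsub>G\<^esub> k) ` {..<n}"
  proof
    show "(\<lambda>k. c [^]\<^bsub>G\<^esub> k) ` {..<n} \<subseteq> generate G {c}"
      using G.gen1_nat[OF fG c] by auto
    show "generate G {c} \<subseteq> (\<lambda>k. c [^]\<^bsub>G\<^esub> k) ` {..<n}"
    proof
      fix y assume "y \<in> generate G {c}"
      then obtain k where k: "y = c [^]\<^bsub>G\<^esub> (k::nat)" using G.gen1_nat[OF fG c] by auto
      have "c [^]\<^bsub>G\<^esub> k = (c [^]\<^bsub>G\<^esub> n) [^]\<^bsub>G\<^esub> (k div n) \<otimes>\<^bsub>G\<^esub> c [^]\<^bsub>G\<^esub> (k mod n)"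
        using c by (simp add: G.nat_pow_pow G.nat_pow_mult)
      also have "\<dots> = c [^]\<^bsub>G\<^esub> (k mod n)" using c n_def by simp
      finally show "y \<in> (\<lambda>k. c [^]\<^bsub>G\<^esub> k) ` {..<n}" using k n0 by auto
    qed
  qed
  have img': "generate H {c'} = (\<lambda>k. c' [^]\<^bsub>H\<^esub> k) ` {..<n}"
  proof
    show "(\<lambda>k. c' [^]\<^bsub>H\<^esub> k) ` {..<n} \<subseteq> generate H {c'}"
      using H.gen1_nat[OF fH c'] by auto
    show "generate H {c'} \<subseteq> (\<lambda>k. c' [^]\<^bsub>H\<^esub> k) ` {..<n}"
    proof
      fix y assume "y \<in> generate H {c'}"
      then obtain k where k: "y = c' [^]\<^bsub>H\<^esub> (k::nat)" using H.gen1_nat[OF fH c'] by auto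
      have "c' [^]\<^bsub>H\<^esub> k = (c' [^]\<^bsub>H\<^esub> n) [^]\<^bsub>H\<^esub> (k div n) \<otimes>\<^bsub>H\<^esub> c' [^]\<^bsub>H\<^esub> (k mod n)"
        using c' by (simp add: H.nat_pow_pow H.nat_pow_mult)
      also have "\<dots> = c' [^]\<^bsub>H\<^esub> (k mod n)"
        using c' H.pow_ord_eq_1[OF c'] n' by simp
      finally show "y \<in> (\<lambda>k. c' [^]\<^bsub>H\<^esub> k) ` {..<n}" using k n0 by auto
    qed
  qed
  have les: "{..<n} = {0..n - 1}" using n0 by auto
  have inj: "inj_on (\<lambda>k. c [^]\<^bsub>G\<^esub> k) {..<n}" using G.ord_inj[OF c] les n_def by simp
  have inj': "inj_on (\<lambda>k. c' [^]\<^bsub>H\<^esub> k) {..<n}" using H.ord_inj[OF c'] les n' by simp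
  have b1: "bij_betw (\<lambda>k. c [^]\<^bsub>G\<^esub> k) {..<n} (generate G {c})"
    using inj img by (simp add: bij_betw_def)
  have b2: "bij_betw (\<lambda>k. c' [^]\<^bsub>H\<^esub> k) {..<n} (generate H {c'})"
    using inj' img' by (simp add: bij_betw_def)
  define \<psi> where "\<psi> = (\<lambda>k. c' [^]\<^bsub>H\<^esub> k) \<circ> the_inv_into {..<n} (\<lambda>k. c [^]\<^bsub>G\<^esub> k)"
  have bij: "bij_betw \<psi> (generate G {c}) (generate H {c'})"
    unfolding \<psi>_def using bij_betw_trans[OF bij_betw_the_inv_into[OF b1] b2] .
  have psiprop: "(\<psi> y [^]\<^bsub>H\<^esub> m = \<one>\<^bsub>H\<^esub>) \<longleftrightarrow> (y [^]\<^bsub>G\<^esub> m = \<one>\<^bsub>G\<^esub>)"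
    if y: "y \<in> generate G {c}" for y and m :: nat
  proof -
    obtain k where k: "k < n" "y = c [^]\<^bsub>G\<^esub> k" using y img by auto
    have "\<psi> y = c' [^]\<^bsub>H\<^esub> k" unfolding \<psi>_def using k inj by (simp add: the_inv_into_f_f)
    hence "(\<psi> y [^]\<^bsub>H\<^esub> m = \<one>\<^bsub>H\<^esub>) \<longleftrightarrow> n dvd k * m"
      using c' n' by (simp add: H.nat_pow_pow H.pow_eq_id)
    also have "\<dots> \<longleftrightarrow> (y [^]\<^bsub>G\<^esub> m = \<one>\<^bsub>G\<^esub>)"
      using c k n_def by (simp add: G.nat_pow_pow G.pow_eq_id)
    finally show ?thesis .
  qed
  show ?thesis using bij psiprop by blast
qed


definition psel :: "('a, 'b) monoid_scheme \<Rightarrow> nat \<Rightarrow> 'a set" where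
  "psel G p = {y \<in> carrier G. \<exists>k::nat. y [^]\<^bsub>G\<^esub> (p ^ k) = \<one>\<^bsub>G\<^esub>}"

lemma inj_image_subset_iff:
  assumes "inj_on f C" "A \<subseteq> C" "B \<subseteq> C"
  shows "f ` A \<subseteq> f ` B \<longleftrightarrow> A \<subseteq> B"
proof
  assume h: "f ` A \<subseteq> f ` B"
  show "A \<subseteq> B"
  proof
    fix x assume x: "x \<in> A"
    then obtain y where "y \<in> B" "f x = f y" using h by blast
    thus "x \<in> B" using assms x inj_onD by (metis subsetD)
  qed
qed auto

lemma Igr_sub: "Igr G x \<subseteq> carrier G"
  unfolding Igr_def by auto

lemma Igr_self: "x \<in> carrier G \<Longrightarrow> x \<in> Igr G x"
  unfolding Igr_def by auto

lemma Igr_trans: "y \<in> Igr G x \<Longrightarrow> Igr G y \<subseteq> Igr G x"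
  unfolding Igr_def by auto

lemma E_char:
  assumes x: "x \<in> carrier G"
  shows "{y \<in> carrier G. Igr G y = Igr G x} =
         {y \<in> Igr G x. \<forall>D\<in>{Igr G z |z. z \<in> carrier G \<and> Igr G z \<subset> Igr G x}. y \<notin> D}"
proof (intro equalityI subsetI)
  fix y assume y: "y \<in> {y \<in> carrier G. Igr G y = Igr G x}"
  hence yc: "y \<in> carrier G" and e: "Igr G y = Igr G x" by auto
  have "y \<in> Igr G x" using Igr_self[OF yc] e by simp
  moreover have "y \<notin> D" if DD: "D \<in> {Igr G z |z. z \<in> carrier G \<and> Igr G z \<subset> Igr G x}" for D
  proof
    assume yD: "y \<in> D"
    obtain z where z: "D = Igr G z" "Igr G z \<subset> Igr G x" using DD by auto
    have "Igr G y \<subseteq> Igr G z" using Igr_trans[of y G z] yD z by blast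
    thus False using z e by blast
  qed
  ultimately show "y \<in> {y \<in> Igr G x. \<forall>D\<in>{Igr G z |z. z \<in> carrier G \<and> Igr G z \<subset> Igr G x}. y \<notin> D}"
    by blast
next
  fix y assume y: "y \<in> {y \<in> Igr G x. \<forall>D\<in>{Igr G z |z. z \<in> carrier G \<and> Igr G z \<subset> Igr G x}. y \<notin> D}"
  hence yI: "y \<in> Igr G x" and nd: "\<forall>D\<in>{Igr G z |z. z \<in> carrier G \<and> Igr G z \<subset> Igr G x}. y \<notin> D" by auto
  have yc: "y \<in> carrier G" using yI Igr_sub[of G x] by blast
  have sub: "Igr G y \<subseteq> Igr G x" using Igr_trans[OF yI] .
  have "\<not> Igr G y \<subset> Igr G x"
  proof
    assume "Igr G y \<subset> Igr G x"
    hence "Igr G y \<in> {Igr G z |z. z \<in> carrier G \<and> Igr G z \<subset> Igr G x}" using yc by blast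
    thus False using nd Igr_self[OF yc] by blast
  qed
  thus "y \<in> {y \<in> carrier G. Igr G y = Igr G x}" using sub yc by blast
qed

lemma nbg_transfer:
  assumes bij: "bij_betw f (carrier G) (carrier H)"
    and adj: "\<forall>x\<in>carrier G. \<forall>y\<in>carrier G. epg_adj G x y \<longleftrightarrow> epg_adj H (f x) (f y)"
    and x: "x \<in> carrier G"
  shows "f ` nbg G x = nbg H (f x)"
proof (intro equalityI subsetI)
  fix y' assume "y' \<in> f ` nbg G x"
  then obtain y where y: "y \<in> carrier G" "y = x \<or> epg_adj G x y" "y' = f y"
    unfolding nbg_def by auto
  have "f y \<in> carrier H" using bij y bij_betwE by blast
  thus "y' \<in> nbg H (f x)" using y adj x unfolding nbg_def by auto
next
  fix y' assume y': "y' \<in> nbg H (f x)"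
  hence "y' \<in> carrier H" unfolding nbg_def by auto
  then obtain y where y: "y \<in> carrier G" "y' = f y" using bij bij_betw_imp_surj_on by blast
  have "f y = f x \<or> epg_adj H (f x) (f y)" using y' y unfolding nbg_def by auto
  hence "y = x \<or> epg_adj G x y"
    using adj x y bij bij_betw_imp_inj_on inj_onD by metis
  thus "y' \<in> f ` nbg G x" using y unfolding nbg_def by auto
qed

lemma Igr_transfer:
  assumes bij: "bij_betw f (carrier G) (carrier H)"
    and adj: "\<forall>x\<in>carrier G. \<forall>y\<in>carrier G. epg_adj G x y \<longleftrightarrow> epg_adj H (f x) (f y)"
    and x: "x \<in> carrier G"
  shows "f ` Igr G x = Igr H (f x)"
proof -
  have inj: "inj_on f (carrier G)" using bij bij_betw_imp_inj_on by blast
  have nsub: "nbg G z \<subseteq> carrier G" for z unfolding nbg_def by auto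
  have iff: "nbg H (f x) \<subseteq> nbg H (f y) \<longleftrightarrow> nbg G x \<subseteq> nbg G y" if y: "y \<in> carrier G" for y
    using nbg_transfer[OF bij adj x] nbg_transfer[OF bij adj y] inj_image_subset_iff[OF inj nsub nsub]
    by metis
  show ?thesis
  proof (intro equalityI subsetI)
    fix y' assume "y' \<in> f ` Igr G x"
    then obtain y where y: "y \<in> Igr G x" "y' = f y" by auto
    have yc: "y \<in> carrier G" using y Igr_sub[of G x] by blast
    have "f y \<in> carrier H" using bij yc bij_betwE by blast
    thus "y' \<in> Igr H (f x)" using iff[OF yc] y IgrD(2)[OF y(1)] unfolding Igr_def by auto
  next
    fix y' assume y': "y' \<in> Igr H (f x)"
    hence "y' \<in> carrier H" using Igr_sub[of H "f x"] by blast
    then obtain y where y: "y \<in> carrier G" "y' = f y" using bij bij_betw_imp_surj_on by blast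
    have "nbg G x \<subseteq> nbg G y" using iff[OF y(1)] IgrD(2)[OF y'] y by simp
    thus "y' \<in> f ` Igr G x" using y unfolding Igr_def by auto
  qed
qed

lemma psi_pow_image:
  fixes m :: nat
  assumes bij: "bij_betw \<psi> A B"
    and pr: "\<forall>y\<in>A. \<forall>m::nat. (\<psi> y [^]\<^bsub>H\<^esub> m = \<one>\<^bsub>H\<^esub>) \<longleftrightarrow> (y [^]\<^bsub>G\<^esub> m = \<one>\<^bsub>G\<^esub>)"
  shows "\<psi> ` {y \<in> A. y [^]\<^bsub>G\<^esub> m = \<one>\<^bsub>G\<^esub>} = {y \<in> B. y [^]\<^bsub>H\<^esub> m = \<one>\<^bsub>H\<^esub>}"
proof (intro equalityI subsetI)
  fix y' assume "y' \<in> \<psi> ` {y \<in> A. y [^]\<^bsub>G\<^esub> m = \<one>\<^bsub>G\<^esub>}"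
  then obtain y where y: "y \<in> A" "y [^]\<^bsub>G\<^esub> m = \<one>\<^bsub>G\<^esub>" "y' = \<psi> y" by auto
  have "\<psi> y \<in> B" using bij_betwE[OF bij] y(1) by blast
  moreover have "\<psi> y [^]\<^bsub>H\<^esub> m = \<one>\<^bsub>H\<^esub>" using pr y(1,2) by blast
  ultimately show "y' \<in> {y \<in> B. y [^]\<^bsub>H\<^esub> m = \<one>\<^bsub>H\<^esub>}" using y(3) by blast
next
  fix y' assume y': "y' \<in> {y \<in> B. y [^]\<^bsub>H\<^esub> m = \<one>\<^bsub>H\<^esub>}"
  then obtain y where y: "y \<in> A" "y' = \<psi> y" using bij bij_betw_imp_surj_on by blast
  thus "y' \<in> \<psi> ` {y \<in> A. y [^]\<^bsub>G\<^esub> m = \<one>\<^bsub>G\<^esub>}" using pr y' by auto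
qed

lemma class_card_eq:
  assumes G: "group G" and H: "group H" and fG: "finite (carrier G)" and fH: "finite (carrier H)"
    and bij: "bij_betw f (carrier G) (carrier H)"
    and adj: "\<forall>x\<in>carrier G. \<forall>y\<in>carrier G. epg_adj G x y \<longleftrightarrow> epg_adj H (f x) (f y)"
    and x: "x \<in> carrier G"
  shows "card ({y \<in> carrier G. Igr G y = Igr G x} \<inter> psel G p) =
         card ({y \<in> carrier H. Igr H y = Igr H (f x)} \<inter> psel H p)"
proof -
  interpret G: group G by fact
  interpret H: group H by fact
  have inj: "inj_on f (carrier G)" using bij bij_betw_imp_inj_on by blast
  have fx: "f x \<in> carrier H" using bij x bij_betwE by blast
  define C where "C = Igr G x"
  define C' where "C' = Igr H (f x)"
  have CC': "C' = f ` C" using Igr_transfer[OF bij adj x] C_def C'_def by simp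
  obtain c where c: "c \<in> carrier G" "C = generate G {c}" using G.Ig_cyclic[OF fG x] C_def by blast
  obtain c' where c': "c' \<in> carrier H" "C' = generate H {c'}" using H.Ig_cyclic[OF fH fx] C'_def by blast
  have Csub: "C \<subseteq> carrier G" using C_def Igr_sub[of G x] by blast
  have "card C' = card C" using CC' inj Csub card_image inj_on_subset by metis
  hence ord: "G.ord c = H.ord c'" using c c' G.generate_pow_card H.generate_pow_card by simp
  obtain \<psi> where psi: "bij_betw \<psi> C C'"
    and pr: "\<forall>y\<in>C. \<forall>m::nat. (\<psi> y [^]\<^bsub>H\<^esub> m = \<one>\<^bsub>H\<^esub>) \<longleftrightarrow> (y [^]\<^bsub>G\<^esub> m = \<one>\<^bsub>G\<^esub>)"
    using cyc_bij[OF G H fG fH c(1) c'(1) ord] c c' by blast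
  define \<D> where "\<D> = {Igr G z |z. z \<in> carrier G \<and> Igr G z \<subset> C}"
  define \<D>' where "\<D>' = {Igr H z |z. z \<in> carrier H \<and> Igr H z \<subset> C'}"
  have Dimg: "\<D>' = (\<lambda>D. f ` D) ` \<D>"
  proof (intro equalityI subsetI)
    fix D' assume "D' \<in> \<D>'"
    then obtain z' where z': "z' \<in> carrier H" "D' = Igr H z'" "Igr H z' \<subset> C'" unfolding \<D>'_def by auto
    then obtain z where z: "z \<in> carrier G" "z' = f z" using bij bij_betw_imp_surj_on by blast
    have e: "D' = f ` Igr G z" using Igr_transfer[OF bij adj z(1)] z z' by simp
    have "f ` Igr G z \<subset> f ` C" using e z' CC' by simp
    hence "Igr G z \<subset> C" using inj_image_subset_iff[OF inj Igr_sub Csub] inj_image_subset_iff[OF inj Csub Igr_sub] by blast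
    thus "D' \<in> (\<lambda>D. f ` D) ` \<D>" using e z unfolding \<D>_def by blast
  next
    fix D' assume "D' \<in> (\<lambda>D. f ` D) ` \<D>"
    then obtain z where z: "z \<in> carrier G" "D' = f ` Igr G z" "Igr G z \<subset> C" unfolding \<D>_def by auto
    have e: "D' = Igr H (f z)" using Igr_transfer[OF bij adj z(1)] z by simp
    have "f ` Igr G z \<subset> f ` C"
      using z(3) inj_image_subset_iff[OF inj Igr_sub Csub] inj_image_subset_iff[OF inj Csub Igr_sub] by blast
    moreover have "f z \<in> carrier H" using bij z bij_betwE by blast
    ultimately show "D' \<in> \<D>'" using e z CC' unfolding \<D>'_def by auto
  qed
  have psiD: "\<psi> ` D = f ` D" if D: "D \<in> \<D>" for D
  proof -
    obtain z where z: "z \<in> carrier G" "D = Igr G z" "D \<subset> C" using D unfolding \<D>_def by auto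
    have sgD: "subgroup D G" using G.Ig_subgroup[OF fG z(1)] z by simp
    have e1: "D = {y \<in> C. y [^]\<^bsub>G\<^esub> card D = \<one>\<^bsub>G\<^esub>}"
      using G.sub_cyclic_eq[OF fG c(1) sgD] z c by auto
    have fz: "f z \<in> carrier H" using bij z bij_betwE by blast
    have fD: "f ` D = Igr H (f z)" using Igr_transfer[OF bij adj z(1)] z by simp
    have sgD': "subgroup (f ` D) H" using H.Ig_subgroup[OF fH fz] fD by simp
    have "f ` D \<subseteq> C'" using CC' z by blast
    hence e2: "f ` D = {y \<in> C'. y [^]\<^bsub>H\<^esub> card (f ` D) = \<one>\<^bsub>H\<^esub>}"
      using H.sub_cyclic_eq[OF fH c'(1) sgD'] c' by auto
    have cd: "card (f ` D) = card D" using inj z Igr_sub[of G z] card_image inj_on_subset by metis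
    have "\<psi> ` D = {y \<in> C'. y [^]\<^bsub>H\<^esub> card D = \<one>\<^bsub>H\<^esub>}"
      using psi_pow_image[OF psi pr, of "card D"] e1 by simp
    also have "\<dots> = f ` D" using e2 cd by simp
    finally show ?thesis .
  qed
  have Cc': "C' \<subseteq> carrier H" using C'_def Igr_sub[of H "f x"] by blast
  have pselC: "\<psi> y \<in> psel H p \<longleftrightarrow> y \<in> psel G p" if y: "y \<in> C" for y
  proof -
    have "\<psi> y \<in> carrier H" using psi y Cc' bij_betwE by blast
    moreover have "y \<in> carrier G" using y Csub by blast
    ultimately show ?thesis using pr y unfolding psel_def by auto
  qed
  have E1: "{y \<in> carrier G. Igr G y = Igr G x} \<inter> psel G p = {y \<in> C. y \<in> psel G p \<and> (\<forall>D\<in>\<D>. y \<notin> D)}"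
    using E_char[OF x] unfolding C_def \<D>_def by auto
  have E2: "{y \<in> carrier H. Igr H y = Igr H (f x)} \<inter> psel H p = {y \<in> C'. y \<in> psel H p \<and> (\<forall>D\<in>\<D>'. y \<notin> D)}"
    using E_char[OF fx] unfolding C'_def \<D>'_def by auto
  have img: "\<psi> ` {y \<in> C. y \<in> psel G p \<and> (\<forall>D\<in>\<D>. y \<notin> D)} = {y \<in> C'. y \<in> psel H p \<and> (\<forall>D\<in>\<D>'. y \<notin> D)}"
  proof (intro equalityI subsetI)
    fix y' assume "y' \<in> \<psi> ` {y \<in> C. y \<in> psel G p \<and> (\<forall>D\<in>\<D>. y \<notin> D)}"
    then obtain y where y: "y \<in> C" "y \<in> psel G p" "\<forall>D\<in>\<D>. y \<notin> D" "y' = \<psi> y" by auto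
    have "y' \<in> C'" using psi y bij_betwE by blast
    moreover have "y' \<in> psel H p" using pselC y by simp
    moreover have "y' \<notin> D'" if D': "D' \<in> \<D>'" for D'
    proof
      assume yD: "y' \<in> D'"
      obtain D where D: "D \<in> \<D>" "D' = f ` D" using D' Dimg by auto
      have "\<psi> y \<in> \<psi> ` D" using yD D psiD y by simp
      then obtain u where u: "u \<in> D" "\<psi> y = \<psi> u" by auto
      have "D \<subseteq> C" using D unfolding \<D>_def by auto
      hence "u = y" using psi u y bij_betw_imp_inj_on inj_onD by (metis subsetD)
      thus False using u y D by blast
    qed
    ultimately show "y' \<in> {y \<in> C'. y \<in> psel H p \<and> (\<forall>D\<in>\<D>'. y \<notin> D)}" by blast
  next
    fix y' assume y': "y' \<in> {y \<in> C'. y \<in> psel H p \<and> (\<forall>D\<in>\<D>'. y \<notin> D)}"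
    then obtain y where y: "y \<in> C" "y' = \<psi> y" using psi bij_betw_imp_surj_on by blast
    have "y \<in> psel G p" using pselC y y' by auto
    moreover have "y \<notin> D" if D: "D \<in> \<D>" for D
    proof
      assume "y \<in> D"
      hence "y' \<in> f ` D" using psiD[OF D] y by blast
      moreover have "f ` D \<in> \<D>'" using D Dimg by blast
      ultimately show False using y' by blast
    qed
    ultimately show "y' \<in> \<psi> ` {y \<in> C. y \<in> psel G p \<and> (\<forall>D\<in>\<D>. y \<notin> D)}" using y by blast
  qed
  have injS: "inj_on \<psi> {y \<in> C. y \<in> psel G p \<and> (\<forall>D\<in>\<D>. y \<notin> D)}"
    using psi bij_betw_imp_inj_on inj_on_subset by (metis (no_types, lifting) mem_Collect_eq subsetI)
  hence "card {y \<in> C'. y \<in> psel H p \<and> (\<forall>D\<in>\<D>'. y \<notin> D)} = card {y \<in> C. y \<in> psel G p \<and> (\<forall>D\<in>\<D>. y \<notin> D)}"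
    using card_image[OF injS] img by simp
  thus ?thesis using E1 E2 by simp
qed

theorem psel_card_eq:
  assumes G: "group G" and H: "group H" and fG: "finite (carrier G)" and fH: "finite (carrier H)"
    and bij: "bij_betw f (carrier G) (carrier H)"
    and adj: "\<forall>x\<in>carrier G. \<forall>y\<in>carrier G. epg_adj G x y \<longleftrightarrow> epg_adj H (f x) (f y)"
  shows "card (psel G p) = card (psel H p)"
proof -
  have inj: "inj_on f (carrier G)" using bij bij_betw_imp_inj_on by blast
  define IG where "IG = Igr G ` carrier G"
  define IH where "IH = Igr H ` carrier H"
  define EG where "EG = (\<lambda>C. {y \<in> carrier G. Igr G y = C} \<inter> psel G p)"
  define EH where "EH = (\<lambda>C. {y \<in> carrier H. Igr H y = C} \<inter> psel H p)"
  have psG: "psel G p \<subseteq> carrier G" unfolding psel_def by auto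
  have psH: "psel H p \<subseteq> carrier H" unfolding psel_def by auto
  have uG: "psel G p = \<Union>(EG ` IG)" using psG unfolding EG_def IG_def by auto
  have uH: "psel H p = \<Union>(EH ` IH)" using psH unfolding EH_def IH_def by auto
  have cG: "card (psel G p) = (\<Sum>C\<in>IG. card (EG C))"
    unfolding uG by (rule card_UN_disjoint) (use fG in \<open>auto simp: IG_def EG_def\<close>)
  have cH: "card (psel H p) = (\<Sum>C\<in>IH. card (EH C))"
    unfolding uH by (rule card_UN_disjoint) (use fH in \<open>auto simp: IH_def EH_def\<close>)
  have bijI: "bij_betw (\<lambda>C. f ` C) IG IH"
  proof (rule bij_betw_imageI)
    show "inj_on (\<lambda>C. f ` C) IG"
      unfolding IG_def using inj_on_image_eq_iff[OF inj] Igr_sub by (smt (verit) imageE inj_onI)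
    show "(\<lambda>C. f ` C) ` IG = IH"
    proof (intro equalityI subsetI)
      fix C' assume "C' \<in> (\<lambda>C. f ` C) ` IG"
      then obtain x where x: "x \<in> carrier G" "C' = f ` Igr G x" unfolding IG_def by auto
      have "f x \<in> carrier H" using bij x bij_betwE by blast
      thus "C' \<in> IH" using Igr_transfer[OF bij adj x(1)] x unfolding IH_def by auto
    next
      fix C' assume "C' \<in> IH"
      then obtain x' where x': "x' \<in> carrier H" "C' = Igr H x'" unfolding IH_def by auto
      then obtain x where x: "x \<in> carrier G" "x' = f x" using bij bij_betw_imp_surj_on by blast
      thus "C' \<in> (\<lambda>C. f ` C) ` IG" using Igr_transfer[OF bij adj x(1)] x' unfolding IG_def by auto
    qed
  qed
  have "(\<Sum>C\<in>IH. card (EH C)) = (\<Sum>C\<in>IG. card (EH (f ` C)))"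
    using sum.reindex_bij_betw[OF bijI, of "\<lambda>C. card (EH C)"] by simp
  also have "\<dots> = (\<Sum>C\<in>IG. card (EG C))"
  proof (rule sum.cong[OF refl])
    fix C assume "C \<in> IG"
    then obtain x where x: "x \<in> carrier G" "C = Igr G x" unfolding IG_def by auto
    show "card (EH (f ` C)) = card (EG C)"
      using class_card_eq[OF G H fG fH bij adj x(1), of p] Igr_transfer[OF bij adj x(1)] x
      unfolding EG_def EH_def by simp
  qed
  finally show ?thesis using cG cH by simp
qed


context group begin

lemma cancel1: "x \<in> carrier G \<Longrightarrow> y \<in> carrier G \<Longrightarrow> inv x \<otimes> (x \<otimes> y) = y"
  by (simp add: m_assoc[symmetric])

lemma cancel2: "x \<in> carrier G \<Longrightarrow> y \<in> carrier G \<Longrightarrow> x \<otimes> (inv x \<otimes> y) = y"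
  by (simp add: m_assoc[symmetric])

lemma comm_pow_right:
  assumes x: "x \<in> carrier G" and y: "y \<in> carrier G" and xy: "x \<otimes> y = y \<otimes> x"
  shows "x \<otimes> y [^] (n::nat) = y [^] n \<otimes> x"
proof (induction n)
  case 0 thus ?case using x by simp
next
  case (Suc n)
  have "x \<otimes> y [^] Suc n = (x \<otimes> y [^] n) \<otimes> y" using x y by (simp add: m_assoc)
  also have "\<dots> = y [^] n \<otimes> (x \<otimes> y)" using Suc x y by (simp add: m_assoc)
  also have "\<dots> = y [^] Suc n \<otimes> x" using xy x y by (simp add: m_assoc)
  finally show ?case .
qed

lemma comm_of_commutator_one:
  assumes a: "a \<in> carrier G" and b: "b \<in> carrier G" and e: "a \<otimes> b \<otimes> inv a \<otimes> inv b = \<one>"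
  shows "a \<otimes> b = b \<otimes> a"
proof -
  have "a \<otimes> b = (a \<otimes> b \<otimes> inv a \<otimes> inv b) \<otimes> (b \<otimes> a)"
    using a b by (simp add: m_assoc cancel1)
  thus ?thesis using e a b by simp
qed

lemma commutator_of_comm:
  assumes a: "a \<in> carrier G" and b: "b \<in> carrier G" and e: "a \<otimes> b = b \<otimes> a"
  shows "a \<otimes> b \<otimes> inv a \<otimes> inv b = \<one>"
  using a b by (simp add: e m_assoc cancel2)

lemma inv_commutator:
  assumes a: "a \<in> carrier G" and b: "b \<in> carrier G"
  shows "inv (a \<otimes> b \<otimes> inv a \<otimes> inv b) = b \<otimes> a \<otimes> inv b \<otimes> inv a"
  using a b by (simp add: inv_mult_group m_assoc)

lemma inv_comm:
  assumes a: "a \<in> carrier G" and b: "b \<in> carrier G" and e: "a \<otimes> b = b \<otimes> a"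
  shows "inv a \<otimes> b = b \<otimes> inv a"
proof -
  have "inv a \<otimes> b = inv a \<otimes> (b \<otimes> a) \<otimes> inv a" using a b by (simp add: m_assoc)
  also have "\<dots> = b \<otimes> inv a" using a b by (simp add: e[symmetric] m_assoc cancel1)
  finally show ?thesis .
qed

lemma commutator_pow:
  assumes a: "a \<in> carrier G" and b: "b \<in> carrier G"
    and ca: "(a \<otimes> b \<otimes> inv a \<otimes> inv b) \<otimes> a = a \<otimes> (a \<otimes> b \<otimes> inv a \<otimes> inv b)"
  shows "a [^] (i::nat) \<otimes> b \<otimes> inv (a [^] i) \<otimes> inv b = (a \<otimes> b \<otimes> inv a \<otimes> inv b) [^] i"
proof (induction i)
  case 0 thus ?case using b by simp
next
  case (Suc i)
  define c where "c = a \<otimes> b \<otimes> inv a \<otimes> inv b"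
  have cc: "c \<in> carrier G" using a b c_def by simp
  have IH: "a [^] i \<otimes> b \<otimes> inv (a [^] i) = c [^] i \<otimes> b"
  proof -
    have "a [^] i \<otimes> b \<otimes> inv (a [^] i) = (a [^] i \<otimes> b \<otimes> inv (a [^] i) \<otimes> inv b) \<otimes> b"
      using a b by (simp add: m_assoc)
    thus ?thesis using Suc c_def by simp
  qed
  have ac: "a \<otimes> c [^] i = c [^] i \<otimes> a" using comm_pow_right[OF a cc] ca c_def by simp
  have "a [^] Suc i \<otimes> b \<otimes> inv (a [^] Suc i) \<otimes> inv b
      = a \<otimes> (a [^] i \<otimes> b \<otimes> inv (a [^] i)) \<otimes> inv a \<otimes> inv b"
    unfolding nat_pow_Suc2[OF a] using a b by (simp add: inv_mult_group m_assoc)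
  also have "\<dots> = (a \<otimes> c [^] i) \<otimes> b \<otimes> inv a \<otimes> inv b" using IH a b cc by (simp add: m_assoc)
  also have "\<dots> = c [^] i \<otimes> a \<otimes> b \<otimes> inv a \<otimes> inv b" using ac by simp
  also have "\<dots> = c [^] i \<otimes> c" using a b cc by (simp add: c_def m_assoc)
  also have "\<dots> = c [^] Suc i" using cc by simp
  finally show ?case using c_def by simp
qed

lemma lc_normal: "lower_central G k \<lhd> G"
proof (induction k)
  case 0 thus ?case by (simp add: normal_self)
next
  case (Suc k)
  interpret N: normal "lower_central G k" G by (rule Suc)
  let ?S = "{a \<otimes> b \<otimes> inv a \<otimes> inv b | a b. a \<in> lower_central G k \<and> b \<in> carrier G}"
  have sub: "lower_central G k \<subseteq> carrier G" using N.subset .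
  have Ssub: "?S \<subseteq> carrier G" using sub by auto
  have "generate G ?S \<lhd> G"
  proof (rule normal_generateI[OF Ssub])
    fix h g assume h: "h \<in> ?S" and g: "g \<in> carrier G"
    then obtain a b where ab: "h = a \<otimes> b \<otimes> inv a \<otimes> inv b" "a \<in> lower_central G k" "b \<in> carrier G" by blast
    have ac: "a \<in> carrier G" using ab sub by blast
    have a': "g \<otimes> a \<otimes> inv g \<in> lower_central G k" using N.inv_op_closed2[OF g ab(2)] .
    have b': "g \<otimes> b \<otimes> inv g \<in> carrier G" using g ab by simp
    have "g \<otimes> h \<otimes> inv g = (g \<otimes> a \<otimes> inv g) \<otimes> (g \<otimes> b \<otimes> inv g) \<otimes> inv (g \<otimes> a \<otimes> inv g) \<otimes> inv (g \<otimes> b \<otimes> inv g)"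
      using g ac ab by (simp add: inv_mult_group m_assoc cancel1)
    thus "g \<otimes> h \<otimes> inv g \<in> ?S" using a' b' by blast
  qed
  thus ?case by (simp add: commutator_subgroup_def)
qed

lemma lc_sub: "lower_central G k \<subseteq> carrier G"
  using lc_normal normal_imp_subgroup subgroup.subset by blast

lemma lc_comm: "a \<in> lower_central G k \<Longrightarrow> b \<in> carrier G \<Longrightarrow> a \<otimes> b \<otimes> inv a \<otimes> inv b \<in> lower_central G (Suc k)"
  by (auto simp: commutator_subgroup_def intro!: generate.incl)

lemma lc_mono: "lower_central G (Suc k) \<subseteq> lower_central G k"
proof -
  interpret N: normal "lower_central G k" G by (rule lc_normal)
  have "{a \<otimes> b \<otimes> inv a \<otimes> inv b | a b. a \<in> lower_central G k \<and> b \<in> carrier G} \<subseteq> lower_central G k"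
  proof
    fix h assume "h \<in> {a \<otimes> b \<otimes> inv a \<otimes> inv b | a b. a \<in> lower_central G k \<and> b \<in> carrier G}"
    then obtain a b where ab: "h = a \<otimes> b \<otimes> inv a \<otimes> inv b" "a \<in> lower_central G k" "b \<in> carrier G" by blast
    have ac: "a \<in> carrier G" using ab N.subset by blast
    have "b \<otimes> inv a \<otimes> inv b \<in> lower_central G k" using N.inv_op_closed2[OF ab(3)] ab(2) N.m_inv_closed by blast
    hence "a \<otimes> (b \<otimes> inv a \<otimes> inv b) \<in> lower_central G k" using ab(2) N.m_closed by blast
    thus "h \<in> lower_central G k" using ab ac by (simp add: m_assoc)
  qed
  thus ?thesis by (simp add: commutator_subgroup_def generate_subgroup_incl N.subgroup_axioms)
qed

lemma nilp_coprime_comm: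
  assumes nil: "lower_central G n = {\<one>}" and fin: "finite (carrier G)"
    and x: "x \<in> carrier G" and y: "y \<in> carrier G" and cop: "coprime (ord x) (ord y)"
  shows "x \<otimes> y = y \<otimes> x"
proof -
  define z where "z = x \<otimes> y \<otimes> inv x \<otimes> inv y"
  have zc: "z \<in> carrier G" using x y z_def by simp
  have step: "z \<in> lower_central G (Suc k)" for k
  proof (induction k)
    case 0 show ?case using lc_comm[of x 0 y] x y z_def by simp
  next
    case (Suc k)
    define L where "L = lower_central G (Suc (Suc k))"
    interpret N: normal L G unfolding L_def by (rule lc_normal)
    define Q where "Q = G Mod L"
    interpret Q: group Q unfolding Q_def by (rule N.factorgroup_is_group)
    interpret h: group_hom G Q "\<lambda>a. L #> a"
      using N.r_coset_hom_Mod Q_def by unfold_locales simp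
    have kerI: "L #> a = \<one>\<^bsub>Q\<^esub>" if "a \<in> L" for a
      using that coset_join2[OF _ N.subgroup_axioms] N.subset Q_def by auto
    have kerD: "a \<in> L" if "a \<in> carrier G" "L #> a = \<one>\<^bsub>Q\<^esub>" for a
      using that rcos_self[OF _ N.subgroup_axioms] Q_def by auto
    let ?x = "L #> x" and ?y = "L #> y" and ?z = "L #> z"
    have xq: "?x \<in> carrier Q" and yq: "?y \<in> carrier Q" and zq: "?z \<in> carrier Q"
      using x y zc by auto
    have zdef: "?z = ?x \<otimes>\<^bsub>Q\<^esub> ?y \<otimes>\<^bsub>Q\<^esub> inv\<^bsub>Q\<^esub> ?x \<otimes>\<^bsub>Q\<^esub> inv\<^bsub>Q\<^esub> ?y"
      using x y z_def by simp
    have comm_q: "?z \<otimes>\<^bsub>Q\<^esub> (L #> w) = (L #> w) \<otimes>\<^bsub>Q\<^esub> ?z" if w: "w \<in> carrier G" for w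
    proof -
      have "z \<otimes> w \<otimes> inv z \<otimes> inv w \<in> L" using lc_comm[OF Suc w] L_def by simp
      hence "L #> (z \<otimes> w \<otimes> inv z \<otimes> inv w) = \<one>\<^bsub>Q\<^esub>" by (rule kerI)
      hence "?z \<otimes>\<^bsub>Q\<^esub> (L #> w) \<otimes>\<^bsub>Q\<^esub> inv\<^bsub>Q\<^esub> ?z \<otimes>\<^bsub>Q\<^esub> inv\<^bsub>Q\<^esub> (L #> w) = \<one>\<^bsub>Q\<^esub>"
        using zc w by simp
      moreover have wq: "L #> w \<in> carrier Q" using w by simp
      ultimately show ?thesis using Q.comm_of_commutator_one[OF zq] by blast
    qed
    have px: "?x [^]\<^bsub>Q\<^esub> ord x = \<one>\<^bsub>Q\<^esub>"
      using h.hom_nat_pow[OF x, of "ord x"] x by simp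
    have py: "?y [^]\<^bsub>Q\<^esub> ord y = \<one>\<^bsub>Q\<^esub>"
      using h.hom_nat_pow[OF y, of "ord y"] y by simp
    have "?z [^]\<^bsub>Q\<^esub> ord x = ?x [^]\<^bsub>Q\<^esub> ord x \<otimes>\<^bsub>Q\<^esub> ?y \<otimes>\<^bsub>Q\<^esub> inv\<^bsub>Q\<^esub> (?x [^]\<^bsub>Q\<^esub> ord x) \<otimes>\<^bsub>Q\<^esub> inv\<^bsub>Q\<^esub> ?y"
      using Q.commutator_pow[OF xq yq, of "ord x"] comm_q[OF x] zdef by simp
    hence z1: "?z [^]\<^bsub>Q\<^esub> ord x = \<one>\<^bsub>Q\<^esub>" using px yq by simp
    have iz: "inv\<^bsub>Q\<^esub> ?z = ?y \<otimes>\<^bsub>Q\<^esub> ?x \<otimes>\<^bsub>Q\<^esub> inv\<^bsub>Q\<^esub> ?y \<otimes>\<^bsub>Q\<^esub> inv\<^bsub>Q\<^esub> ?x"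
      using Q.inv_commutator[OF xq yq] zdef by simp
    have cy: "inv\<^bsub>Q\<^esub> ?z \<otimes>\<^bsub>Q\<^esub> ?y = ?y \<otimes>\<^bsub>Q\<^esub> inv\<^bsub>Q\<^esub> ?z"
      using Q.inv_comm[OF zq yq comm_q[OF y]] .
    have "(inv\<^bsub>Q\<^esub> ?z) [^]\<^bsub>Q\<^esub> ord y = ?y [^]\<^bsub>Q\<^esub> ord y \<otimes>\<^bsub>Q\<^esub> ?x \<otimes>\<^bsub>Q\<^esub> inv\<^bsub>Q\<^esub> (?y [^]\<^bsub>Q\<^esub> ord y) \<otimes>\<^bsub>Q\<^esub> inv\<^bsub>Q\<^esub> ?x"
      using Q.commutator_pow[OF yq xq, of "ord y"] cy iz by simp
    hence "(inv\<^bsub>Q\<^esub> ?z) [^]\<^bsub>Q\<^esub> ord y = \<one>\<^bsub>Q\<^esub>" using py xq by simp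
    hence z2: "?z [^]\<^bsub>Q\<^esub> ord y = \<one>\<^bsub>Q\<^esub>" using Q.nat_pow_inv[OF zq] zq by simp
    have "Q.ord ?z dvd ord x" "Q.ord ?z dvd ord y"
      using z1 z2 Q.pow_eq_id[OF zq] by auto
    hence "Q.ord ?z = 1" using cop by (metis coprime_common_divisor_nat)
    hence "?z = \<one>\<^bsub>Q\<^esub>" using Q.ord_eq_1[OF zq] by simp
    hence "z \<in> L" using kerD zc by simp
    thus ?case using L_def by simp
  qed
  have "z \<in> lower_central G n" using step[of n] lc_mono[of n] by blast
  hence "z = \<one>" using nil by simp
  hence "x \<otimes> y \<otimes> inv x \<otimes> inv y = \<one>" unfolding z_def .
  thus ?thesis by (rule comm_of_commutator_one[OF x y])
qed

end


definition ccomm :: "('a, 'b) monoid_scheme \<Rightarrow> bool" where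
  "ccomm G \<longleftrightarrow> (\<forall>x\<in>carrier G. \<forall>y\<in>carrier G. coprime (group.ord G x) (group.ord G y) \<longrightarrow> x \<otimes>\<^bsub>G\<^esub> y = y \<otimes>\<^bsub>G\<^esub> x)"

context group begin

lemma sub_card_dvd:
  assumes "subgroup I G" "subgroup J G" "I \<subseteq> J"
  shows "card I dvd card J"
proof -
  have sI: "subgroup I (G\<lparr>carrier := J\<rparr>)" using subgroup_incl[OF assms] .
  interpret J: group "G\<lparr>carrier := J\<rparr>" using subgroup.subgroup_is_group[OF assms(2) is_group] .
  have "card (rcosets\<^bsub>G\<lparr>carrier := J\<rparr>\<^esub> I) * card I = order (G\<lparr>carrier := J\<rparr>)"
    using J.lagrange[OF sI] .
  moreover have "order (G\<lparr>carrier := J\<rparr>) = card J" by (simp add: order_def)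
  ultimately have "card (rcosets\<^bsub>G\<lparr>carrier := J\<rparr>\<^esub> I) * card I = card J" by simp
  thus ?thesis by (metis dvd_triv_right)
qed

lemma ord_dvd_sub:
  assumes fin: "finite (carrier G)" and P: "subgroup P G" and x: "x \<in> P"
  shows "ord x dvd card P"
proof -
  have xc: "x \<in> carrier G" using subgroup.mem_carrier[OF P x] .
  have "generate G {x} \<subseteq> P" using P x by (intro generate_subgroup_incl) auto
  hence "card (generate G {x}) dvd card P"
    using sub_card_dvd[OF generate_is_subgroup P] xc by auto
  thus ?thesis using generate_pow_card[OF xc] by simp
qed

lemma fin_closed_subgroup:
  assumes fin: "finite (carrier G)" and S: "S \<subseteq> carrier G" "\<one> \<in> S"
    and cl: "\<And>a b. a \<in> S \<Longrightarrow> b \<in> S \<Longrightarrow> a \<otimes> b \<in> S"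
  shows "subgroup S G"
proof (rule subgroupI)
  show "S \<subseteq> carrier G" "S \<noteq> {}" using S by auto
next
  fix a b assume "a \<in> S" "b \<in> S" thus "a \<otimes> b \<in> S" by (rule cl)
next
  fix a assume a: "a \<in> S"
  have ac: "a \<in> carrier G" using a S by blast
  have pw: "a [^] (n::nat) \<in> S" for n
    by (induction n) (use S a cl in auto)
  have o: "ord a \<ge> 1" using ord_ge_1[OF fin ac] .
  have "a [^] (ord a - 1) \<otimes> a = a [^] ord a"
    using ac o by (simp add: nat_pow_Suc[symmetric] del: nat_pow_Suc)
  also have "\<dots> = \<one>" using ac by simp
  finally have "inv a = a [^] (ord a - 1)" using ac by (intro inv_equality) auto
  thus "inv a \<in> S" using pw by simp
qed

lemma conj_pow:
  assumes g: "g \<in> carrier G" and h: "h \<in> carrier G"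
  shows "(g \<otimes> h \<otimes> inv g) [^] (n::nat) = g \<otimes> h [^] n \<otimes> inv g"
proof (induction n)
  case 0 thus ?case using g by simp
next
  case (Suc n)
  have "(g \<otimes> h \<otimes> inv g) [^] Suc n = (g \<otimes> h [^] n \<otimes> inv g) \<otimes> (g \<otimes> h \<otimes> inv g)"
    using Suc by simp
  also have "\<dots> = g \<otimes> h [^] Suc n \<otimes> inv g" using g h by (simp add: m_assoc cancel1)
  finally show ?case .
qed

lemma primepow_ord:
  assumes fin: "finite (carrier G)" and p: "Factorial_Ring.prime p" and P: "subgroup P G" and cP: "card P = p ^ a"
    and x: "x \<in> P"
  shows "\<exists>j. ord x = p ^ j"
  using ord_dvd_sub[OF fin P x] cP divides_primepow_nat[OF p] by auto

lemma sylow_exists: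
  assumes fin: "finite (carrier G)" and p: "Factorial_Ring.prime p"
  shows "\<exists>P. subgroup P G \<and> card P = p ^ multiplicity p (order G)"
proof -
  have "order G = p ^ multiplicity p (order G) * (order G div p ^ multiplicity p (order G))"
    using multiplicity_dvd[of p "order G"] by simp
  thus ?thesis using sylow_thm[OF p is_group _ fin] by blast
qed

lemma ccomm_sylow_normal:
  assumes fin: "finite (carrier G)" and cc: "ccomm G" and p: "Factorial_Ring.prime p"
    and P: "subgroup P G" and cP: "card P = p ^ multiplicity p (order G)"
  shows "P \<lhd> G"
proof -
  define N where "N = {g \<in> carrier G. \<forall>h\<in>P. g \<otimes> h \<otimes> inv g \<in> P}"
  have Psub: "P \<subseteq> carrier G" using subgroup.subset[OF P] .
  have sN: "subgroup N G"
  proof (rule fin_closed_subgroup[OF fin])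
    show "N \<subseteq> carrier G" unfolding N_def by auto
    show "\<one> \<in> N" unfolding N_def using Psub by auto
    fix a b assume a: "a \<in> N" and b: "b \<in> N"
    have ac: "a \<in> carrier G" and bc: "b \<in> carrier G" using a b N_def by auto
    have "a \<otimes> b \<otimes> h \<otimes> inv (a \<otimes> b) \<in> P" if h: "h \<in> P" for h
    proof -
      have hc: "h \<in> carrier G" using h Psub by blast
      have "b \<otimes> h \<otimes> inv b \<in> P" using b h N_def by auto
      hence "a \<otimes> (b \<otimes> h \<otimes> inv b) \<otimes> inv a \<in> P" using a N_def by auto
      thus ?thesis using ac bc hc by (simp add: m_assoc inv_mult_group)
    qed
    thus "a \<otimes> b \<in> N" unfolding N_def using ac bc by auto
  qed
  have pprime: "y \<in> N" if y: "y \<in> carrier G" "\<not> p dvd ord y" for y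
  proof -
    have "y \<otimes> h \<otimes> inv y \<in> P" if h: "h \<in> P" for h
    proof -
      have hc: "h \<in> carrier G" using h Psub by blast
      obtain j where j: "ord h = p ^ j" using primepow_ord[OF fin p P cP h] by blast
      have "coprime (ord h) (ord y)" using j prime_imp_coprime[OF p y(2)] by simp
      hence "h \<otimes> y = y \<otimes> h" using cc hc y unfolding ccomm_def by blast
      hence "y \<otimes> h \<otimes> inv y = h \<otimes> y \<otimes> inv y" by simp
      also have "\<dots> = h" using hc y by (simp add: m_assoc)
      finally have "y \<otimes> h \<otimes> inv y = h" .
      thus ?thesis using h by simp
    qed
    thus ?thesis unfolding N_def using y by auto
  qed
  have PN: "P \<subseteq> N" unfolding N_def using P Psub
    by (auto intro: subgroup.m_closed subgroup.m_inv_closed)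
  have Nsub0: "N \<subseteq> carrier G" unfolding N_def by auto
  have finN: "finite N" using fin Nsub0 by (rule finite_subset[rotated])
  have cN0: "card N \<noteq> 0" using subgroup.finite_imp_card_positive[OF sN] fin by simp
  have pnu: "\<not> is_unit p" using p not_prime_unit by blast
  have mult: "multiplicity q (order G) \<le> multiplicity q (card N)" if q: "Factorial_Ring.prime q" for q
  proof (cases "q = p")
    case True
    have "card P dvd card N" using sub_card_dvd[OF P sN PN] .
    thus ?thesis using True cP multiplicity_geI[OF cN0 pnu] by simp
  next
    case False
    obtain Q where Q: "subgroup Q G" "card Q = q ^ multiplicity q (order G)"
      using sylow_exists[OF fin q] by blast
    have "Q \<subseteq> N"
    proof
      fix x assume x: "x \<in> Q"
      have xc: "x \<in> carrier G" using subgroup.mem_carrier[OF Q(1) x] .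
      obtain j where j: "ord x = q ^ j" using primepow_ord[OF fin q Q(1) Q(2) x] by blast
      have "\<not> p dvd ord x"
      proof
        assume "p dvd ord x"
        hence "p dvd q" using j prime_dvd_power[OF p] by simp
        thus False using primes_dvd_imp_eq[OF p q] False by simp
      qed
      thus "x \<in> N" using pprime xc by blast
    qed
    hence "card Q dvd card N" using sub_card_dvd[OF Q(1) sN] by simp
    moreover have "\<not> is_unit q" using q not_prime_unit by blast
    ultimately show ?thesis using Q(2) multiplicity_geI[OF cN0] by simp
  qed
  have o0: "order G \<noteq> 0" using fin order_gt_0_iff_finite by (metis not_gr0)
  have "order G dvd card N" using multiplicity_le_imp_dvd[OF o0 mult] by blast
  moreover have Nsub: "N \<subseteq> carrier G" unfolding N_def by auto
  moreover have "card N > 0" using cN0 by simp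
  ultimately have "card N = card (carrier G)"
    by (metis antisym card_mono dvd_imp_le fin order_def)
  hence "N = carrier G" using card_subset_eq[OF fin Nsub] by simp
  hence "\<forall>g\<in>carrier G. \<forall>h\<in>P. g \<otimes> h \<otimes> inv g \<in> P" unfolding N_def by blast
  thus ?thesis using normal_invI[OF P] by blast
qed

lemma normal_sylow_psel:
  assumes fin: "finite (carrier G)" and p: "Factorial_Ring.prime p"
    and P: "P \<lhd> G" and cP: "card P = p ^ multiplicity p (order G)"
  shows "psel G p \<subseteq> P"
proof
  fix g assume g: "g \<in> psel G p"
  then obtain k where gc: "g \<in> carrier G" and gk: "g [^] (p ^ k) = \<one>" unfolding psel_def by auto
  interpret N: normal P G by (rule P)
  define Q where "Q = G Mod P"
  interpret Q: group Q unfolding Q_def by (rule N.factorgroup_is_group)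
  define m where "m = order G div p ^ multiplicity p (order G)"
  have oG: "order G \<noteq> 0" using fin order_gt_0_iff_finite by (metis not_gr0)
  have pnu: "\<not> is_unit p" using p not_prime_unit by blast
  have ndvd: "\<not> p dvd m" using oG pnu multiplicity_decompose[of "order G" p] m_def by simp
  have finQ: "finite (carrier Q)" using fin unfolding Q_def carrier_FactGroup by simp
  have "card (rcosets P) * card P = order G" using lagrange[OF N.subgroup_axioms] .
  hence "order Q = m"
    using cP m_def multiplicity_dvd[of p "order G"] p
    by (simp add: Q_def order_def FactGroup_def) (metis nonzero_mult_div_cancel_right power_not_zero prime_gt_0_nat not_gr0)
  hence "(P #> g) [^]\<^bsub>Q\<^esub> m = \<one>\<^bsub>Q\<^esub>"
    using Q.pow_order_eq_1[of "P #> g"] gc Q_def by (simp add: FactGroup_def RCOSETS_def) blast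
  hence "P #> (g [^] m) = P" using N.FactGroup_pow[OF gc, of m] Q_def by simp
  hence gm: "g [^] m \<in> P" using rcos_self[OF _ N.subgroup_axioms, of "g [^] m"] gc by simp
  have m0: "m \<noteq> 0" using ndvd by (metis dvd_0_right)
  obtain u v where uv: "m * u = p ^ k * v + gcd m (p ^ k)" using bezout_nat[OF m0] by blast
  have "coprime m (p ^ k)" using prime_imp_coprime[OF p ndvd] by (simp add: coprime_commute)
  hence uv': "m * u = p ^ k * v + 1" using uv by simp
  have "g [^] (m * u) = (g [^] (p ^ k)) [^] v \<otimes> g"
    using uv' gc by (simp add: nat_pow_pow[symmetric] nat_pow_mult[symmetric])
  also have "\<dots> = g" using gk gc by simp
  finally have geq: "g = (g [^] m) [^] u" using gc by (simp add: nat_pow_pow)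
  have "(g [^] m) [^] u \<in> P" using sub_nat_pow_closed[OF N.subgroup_axioms gm] .
  thus "g \<in> P" using geq by (rule ssubst[where P = "\<lambda>t. t \<in> P", rotated])
qed

end

theorem nilp_psel_bound:
  assumes G: "group G" and fin: "finite (carrier G)" and nil: "nilpotent_group G" and p: "Factorial_Ring.prime p"
  shows "card (psel G p) \<le> p ^ multiplicity p (order G)"
proof -
  interpret group G by fact
  obtain n where n: "lower_central G n = {\<one>\<^bsub>G\<^esub>}" using nil unfolding nilpotent_group_def by blast
  have cc: "ccomm G" unfolding ccomm_def using nilp_coprime_comm[OF n fin] by blast
  obtain P where P: "subgroup P G" "card P = p ^ multiplicity p (order G)"
    using sylow_exists[OF fin p] by blast
  have "P \<lhd> G" using ccomm_sylow_normal[OF fin cc p P] .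
  hence "psel G p \<subseteq> P" using normal_sylow_psel[OF fin p _ P(2)] by blast
  moreover have "finite P" using fin subgroup.subset[OF P(1)] by (rule finite_subset[rotated])
  ultimately show ?thesis using P(2) card_mono[of P "psel G p"] by simp
qed


fun zs :: "('a, 'b) monoid_scheme \<Rightarrow> nat \<Rightarrow> 'a set" where
  "zs G 0 = {\<one>\<^bsub>G\<^esub>}"
| "zs G (Suc i) = {x \<in> carrier G. \<forall>g\<in>carrier G. x \<otimes>\<^bsub>G\<^esub> g \<otimes>\<^bsub>G\<^esub> inv\<^bsub>G\<^esub> x \<otimes>\<^bsub>G\<^esub> inv\<^bsub>G\<^esub> g \<in> zs G i}"

context group begin

lemma zs_normal:
  assumes fin: "finite (carrier G)"
  shows "zs G i \<lhd> G"
proof (induction i)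
  case 0
  show ?case by (simp add: one_is_normal)
next
  case (Suc i)
  interpret N: normal "zs G i" G by (rule Suc)
  have sub: "subgroup (zs G (Suc i)) G"
  proof (rule fin_closed_subgroup[OF fin])
    show "zs G (Suc i) \<subseteq> carrier G" by auto
    show "\<one> \<in> zs G (Suc i)" using N.one_closed by simp
    fix x y assume x: "x \<in> zs G (Suc i)" and y: "y \<in> zs G (Suc i)"
    have xc: "x \<in> carrier G" and yc: "y \<in> carrier G" using x y by auto
    have "x \<otimes> y \<otimes> g \<otimes> inv (x \<otimes> y) \<otimes> inv g \<in> zs G i" if g: "g \<in> carrier G" for g
    proof -
      have a: "y \<otimes> g \<otimes> inv y \<otimes> inv g \<in> zs G i" using y g by simp
      have b: "x \<otimes> g \<otimes> inv x \<otimes> inv g \<in> zs G i" using x g by simp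
      have c: "x \<otimes> (y \<otimes> g \<otimes> inv y \<otimes> inv g) \<otimes> inv x \<in> zs G i" using N.inv_op_closed2[OF xc a] .
      have "x \<otimes> y \<otimes> g \<otimes> inv (x \<otimes> y) \<otimes> inv g
          = (x \<otimes> (y \<otimes> g \<otimes> inv y \<otimes> inv g) \<otimes> inv x) \<otimes> (x \<otimes> g \<otimes> inv x \<otimes> inv g)"
        using xc yc g by (simp add: m_assoc inv_mult_group cancel1)
      thus ?thesis using b c N.m_closed by simp
    qed
    thus "x \<otimes> y \<in> zs G (Suc i)" using xc yc by simp
  qed
  show ?case
  proof (rule normal_invI[OF sub])
    fix k h assume k: "k \<in> carrier G" and h: "h \<in> zs G (Suc i)"
    have hc: "h \<in> carrier G" using h by simp
    have "k \<otimes> h \<otimes> inv k \<otimes> g \<otimes> inv (k \<otimes> h \<otimes> inv k) \<otimes> inv g \<in> zs G i" if g: "g \<in> carrier G" for g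
    proof -
      have g': "inv k \<otimes> g \<otimes> k \<in> carrier G" using k g by simp
      have a: "h \<otimes> (inv k \<otimes> g \<otimes> k) \<otimes> inv h \<otimes> inv (inv k \<otimes> g \<otimes> k) \<in> zs G i" using h g' by simp
      have "k \<otimes> h \<otimes> inv k \<otimes> g \<otimes> inv (k \<otimes> h \<otimes> inv k) \<otimes> inv g
          = k \<otimes> (h \<otimes> (inv k \<otimes> g \<otimes> k) \<otimes> inv h \<otimes> inv (inv k \<otimes> g \<otimes> k)) \<otimes> inv k"
        using k hc g by (simp add: m_assoc inv_mult_group cancel1 cancel2)
      thus ?thesis using N.inv_op_closed2[OF k a] by simp
    qed
    thus "k \<otimes> h \<otimes> inv k \<in> zs G (Suc i)" using k hc by simp
  qed
qed

lemma zs_sub: "zs G i \<subseteq> carrier G"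
  by (cases i) auto

lemma zs_mono: "zs G i \<subseteq> zs G (Suc i)"
proof (induction i)
  case 0 thus ?case by (auto simp: commutator_of_comm)
next
  case (Suc i)
  show ?case
  proof
    fix x assume x: "x \<in> zs G (Suc i)"
    thus "x \<in> zs G (Suc (Suc i))" using Suc by auto
  qed
qed

lemma zs_mono': "i \<le> j \<Longrightarrow> zs G i \<subseteq> zs G j"
proof (induction j)
  case 0 thus ?case by simp
next
  case (Suc j)
  show ?case
  proof (cases "i \<le> j")
    case True
    thus ?thesis using Suc zs_mono[of j] by blast
  next
    case False
    hence "i = Suc j" using Suc by simp
    thus ?thesis by simp
  qed
qed

lemma lc_zs:
  assumes fin: "finite (carrier G)" and top: "zs G c = carrier G"
  shows "k \<le> c \<Longrightarrow> lower_central G k \<subseteq> zs G (c - k)"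
proof (induction k)
  case 0 thus ?case using top by simp
next
  case (Suc k)
  interpret N: normal "zs G (c - Suc k)" G by (rule zs_normal[OF fin])
  have IH: "lower_central G k \<subseteq> zs G (c - k)" using Suc by simp
  have ck: "c - k = Suc (c - Suc k)" using Suc by simp
  have "{a \<otimes> b \<otimes> inv a \<otimes> inv b | a b. a \<in> lower_central G k \<and> b \<in> carrier G} \<subseteq> zs G (c - Suc k)"
  proof
    fix h assume "h \<in> {a \<otimes> b \<otimes> inv a \<otimes> inv b | a b. a \<in> lower_central G k \<and> b \<in> carrier G}"
    then obtain a b where ab: "h = a \<otimes> b \<otimes> inv a \<otimes> inv b" "a \<in> lower_central G k" "b \<in> carrier G" by blast
    have "a \<in> zs G (Suc (c - Suc k))" using IH ab ck by auto
    thus "h \<in> zs G (c - Suc k)" using ab by simp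
  qed
  thus ?case by (simp add: commutator_subgroup_def generate_subgroup_incl N.subgroup_axioms)
qed

lemma zs_top_nilpotent:
  assumes fin: "finite (carrier G)" and top: "zs G c = carrier G"
  shows "nilpotent_group G"
proof -
  have "lower_central G c \<subseteq> {\<one>}" using lc_zs[OF fin top, of c] by simp
  moreover have "\<one> \<in> lower_central G c"
    using lc_normal[of c] normal_imp_subgroup subgroup.one_closed by blast
  ultimately have "lower_central G c = {\<one>}" by blast
  thus ?thesis unfolding nilpotent_group_def using is_group by blast
qed

end


context group begin

lemma pgroup_grow:
  assumes fin: "finite (carrier G)" and p: "Factorial_Ring.prime p" and oG: "order G = p ^ a"
    and Z: "Z \<lhd> G" and Zne: "Z \<noteq> carrier G"
  shows "\<exists>x\<in>carrier G. x \<notin> Z \<and> (\<forall>g\<in>carrier G. x \<otimes> g \<otimes> inv x \<otimes> inv g \<in> Z)"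
proof (rule ccontr)
  assume nex: "\<not> (\<exists>x\<in>carrier G. x \<notin> Z \<and> (\<forall>g\<in>carrier G. x \<otimes> g \<otimes> inv x \<otimes> inv g \<in> Z))"
  interpret N: normal Z G by (rule Z)
  define Q where "Q = G Mod Z"
  interpret Q: group Q unfolding Q_def by (rule N.factorgroup_is_group)
  interpret h: group_hom G Q "\<lambda>a. Z #> a"
    using N.r_coset_hom_Mod Q_def by unfold_locales simp
  have kerI: "Z #> a = \<one>\<^bsub>Q\<^esub>" if "a \<in> Z" for a
    using that coset_join2[OF _ N.subgroup_axioms] N.subset Q_def by auto
  have kerD: "a \<in> Z" if "a \<in> carrier G" "Z #> a = \<one>\<^bsub>Q\<^esub>" for a
    using that rcos_self[OF _ N.subgroup_axioms] Q_def by auto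
  define \<phi> where "\<phi> = (\<lambda>g. \<lambda>h\<in>carrier Q. g \<otimes>\<^bsub>Q\<^esub> h \<otimes>\<^bsub>Q\<^esub> inv\<^bsub>Q\<^esub> g)"
  interpret A: group_action Q "carrier Q" \<phi> unfolding \<phi>_def by (rule Q.action_by_conjugation)
  have cQ: "carrier Q = (\<lambda>a. Z #> a) ` carrier G" unfolding Q_def carrier_FactGroup ..
  have finQ: "finite (carrier Q)" using fin cQ by simp
  have lag: "card (carrier Q) * card Z = p ^ a"
    using lagrange[OF N.subgroup_axioms] oG unfolding Q_def by (simp add: FactGroup_def)
  have Zsub: "Z \<subseteq> carrier G" using N.subset .
  have "card Z dvd p ^ a" using lag by (metis dvd_triv_right)
  then obtain j where j: "j \<le> a" "card Z = p ^ j" using divides_primepow_nat[OF p] by blast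
  have "card Z < card (carrier G)" using psubset_card_mono[OF fin] Zsub Zne by blast
  hence "j < a" using j oG p unfolding order_def by (metis power_strict_increasing_iff prime_gt_1_nat)
  have p1: "p > 1" using p prime_gt_1_nat by blast
  have cQe: "card (carrier Q) = p ^ (a - j)"
    using lag j p1 by (metis \<open>j < a\<close> le_add_diff_inverse2 less_imp_le_nat nonzero_mult_div_cancel_right
        power_add power_not_zero not_one_less_zero gr_implies_not0 div_mult_self1_is_m)
  have pQ: "p dvd card (carrier Q)" using cQe \<open>j < a\<close> by simp
  have osz: "card orb = 1 \<or> p dvd card orb" if orb: "orb \<in> orbits Q (carrier Q) \<phi>" for orb
  proof -
    obtain x where x: "x \<in> carrier Q" "orb = orbit Q \<phi> x" using orb unfolding orbits_def by blast
    have "card orb * card (stabilizer Q \<phi> x) = order Q" using A.orbit_stabilizer_theorem[OF x(1)] x by simp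
    hence "card orb dvd p ^ (a - j)" using cQe unfolding order_def by (metis dvd_triv_left)
    then obtain i where "card orb = p ^ i" using divides_primepow_nat[OF p] by blast
    thus ?thesis by (cases i) auto
  qed
  have fixo: "orb = {\<one>\<^bsub>Q\<^esub>}" if orb: "orb \<in> orbits Q (carrier Q) \<phi>" and c1: "card orb = 1" for orb
  proof -
    obtain x where x: "x \<in> carrier Q" "orb = orbit Q \<phi> x" using orb unfolding orbits_def by blast
    have xo: "x \<in> orb" using A.orbit_refl[OF x(1)] x by simp
    have orbx: "orb = {x}" using c1 xo by (metis card_1_singletonE singletonD)
    have fixx: "g \<otimes>\<^bsub>Q\<^esub> x \<otimes>\<^bsub>Q\<^esub> inv\<^bsub>Q\<^esub> g = x" if g: "g \<in> carrier Q" for g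
    proof -
      have "\<phi> g x \<in> orbit Q \<phi> x" unfolding orbit_def using g by blast
      hence "\<phi> g x = x" using orbx x by simp
      thus ?thesis using x unfolding \<phi>_def by simp
    qed
    obtain x0 where x0: "x0 \<in> carrier G" "x = Z #> x0" using x cQ by blast
    have "x0 \<otimes> g0 \<otimes> inv x0 \<otimes> inv g0 \<in> Z" if g0: "g0 \<in> carrier G" for g0
    proof -
      have "Z #> (g0 \<otimes> x0 \<otimes> inv g0) = Z #> x0"
        using fixx[of "Z #> g0"] g0 x0 by simp
      hence "Z #> (g0 \<otimes> x0 \<otimes> inv g0 \<otimes> inv x0) = \<one>\<^bsub>Q\<^esub>"
        using g0 x0 by simp
      hence w: "g0 \<otimes> x0 \<otimes> inv g0 \<otimes> inv x0 \<in> Z" using kerD g0 x0 by simp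
      have "inv (g0 \<otimes> x0 \<otimes> inv g0 \<otimes> inv x0) = x0 \<otimes> g0 \<otimes> inv x0 \<otimes> inv g0"
        using inv_commutator[OF g0 x0(1)] .
      thus ?thesis using N.m_inv_closed[OF w] by simp
    qed
    hence "x0 \<in> Z" using nex x0 by blast
    hence "x = \<one>\<^bsub>Q\<^esub>" using kerI x0 by simp
    thus ?thesis using orbx by simp
  qed
  define O1 where "O1 = orbit Q \<phi> \<one>\<^bsub>Q\<^esub>"
  have O1in: "O1 \<in> orbits Q (carrier Q) \<phi>" unfolding O1_def orbits_def by blast
  have O1e: "O1 = {\<one>\<^bsub>Q\<^esub>}"
  proof -
    have "O1 \<subseteq> {\<one>\<^bsub>Q\<^esub>}" unfolding O1_def orbit_def \<phi>_def by auto
    moreover have "\<one>\<^bsub>Q\<^esub> \<in> O1" unfolding O1_def using A.orbit_refl by simp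
    ultimately show ?thesis by blast
  qed
  have finO: "finite (orbits Q (carrier Q) \<phi>)"
  proof -
    have "orbits Q (carrier Q) \<phi> \<subseteq> Pow (carrier Q)"
      using A.orbits_coverture by blast
    thus ?thesis using finQ finite_subset by blast
  qed
  have sum: "(\<Sum>orb\<in>orbits Q (carrier Q) \<phi>. card orb) = card (carrier Q)"
  proof -
    have "(\<Sum>orb\<in>orbits Q (carrier Q) \<phi>. card orb) = (\<Sum>orb\<in>orbits Q (carrier Q) \<phi>. \<Sum>x\<in>orb. (1::nat))"
      by (rule sum.cong) simp_all
    also have "\<dots> = (\<Sum>x\<in>carrier Q. (1::nat))" by (rule A.disjoint_sum[OF finQ])
    finally show ?thesis by simp
  qed
  have "(\<Sum>orb\<in>orbits Q (carrier Q) \<phi>. card orb) = card O1 + (\<Sum>orb\<in>orbits Q (carrier Q) \<phi> - {O1}. card orb)"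
    using sum.remove[OF finO O1in] by simp
  moreover have "p dvd (\<Sum>orb\<in>orbits Q (carrier Q) \<phi> - {O1}. card orb)"
  proof (rule dvd_sum)
    fix orb assume o: "orb \<in> orbits Q (carrier Q) \<phi> - {O1}"
    hence "card orb \<noteq> 1" using fixo O1e by blast
    thus "p dvd card orb" using osz o by blast
  qed
  ultimately have "p dvd card (carrier Q) - 1" using sum O1e by simp
  hence "p dvd 1" using pQ by (metis dvd_diff_nat le_add_diff_inverse2 diff_diff_cancel One_nat_def
        card_0_eq finQ Q.one_closed empty_iff less_one not_less dvd_0_right cQe power_not_zero
        \<open>j < a\<close>)
  thus False using p by simp
qed

lemma pgroup_zs_top:
  assumes fin: "finite (carrier G)" and p: "Factorial_Ring.prime p" and oG: "order G = p ^ a"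
  shows "zs G (order G) = carrier G"
proof -
  have claim: "zs G i = carrier G \<or> Suc i \<le> card (zs G i)" for i
  proof (induction i)
    case 0 thus ?case by simp
  next
    case (Suc i)
    show ?case
    proof (cases "zs G i = carrier G")
      case True
      thus ?thesis using zs_mono[of i] zs_sub[of "Suc i"] by blast
    next
      case False
      hence ci: "Suc i \<le> card (zs G i)" using Suc by blast
      obtain x where x: "x \<in> carrier G" "x \<notin> zs G i" "\<forall>g\<in>carrier G. x \<otimes> g \<otimes> inv x \<otimes> inv g \<in> zs G i"
        using pgroup_grow[OF fin p oG zs_normal[OF fin] False] by blast
      have "x \<in> zs G (Suc i)" using x by simp
      hence "zs G i \<subset> zs G (Suc i)" using zs_mono[of i] x(2) by blast
      moreover have "finite (zs G (Suc i))" using fin zs_sub[of "Suc i"] finite_subset by blast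
      ultimately have "card (zs G i) < card (zs G (Suc i))" by (rule psubset_card_mono[rotated])
      thus ?thesis using ci by simp
    qed
  qed
  show ?thesis
  proof (rule ccontr)
    assume ne: "zs G (order G) \<noteq> carrier G"
    hence "Suc (order G) \<le> card (zs G (order G))" using claim by blast
    moreover have "card (zs G (order G)) \<le> order G"
      unfolding order_def using card_mono[OF fin zs_sub] .
    ultimately show False by simp
  qed
qed

end


context group begin

lemma psel_sub: "psel G p \<subseteq> carrier G"
  unfolding psel_def by auto

lemma psel_sylow:
  assumes fin: "finite (carrier G)" and p: "Factorial_Ring.prime p"
    and bound: "card (psel G p) \<le> p ^ multiplicity p (order G)"
  shows "psel G p \<lhd> G" "card (psel G p) = p ^ multiplicity p (order G)"
proof -
  obtain P where P: "subgroup P G" "card P = p ^ multiplicity p (order G)"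
    using sylow_exists[OF fin p] by blast
  have PS: "P \<subseteq> psel G p"
  proof
    fix x assume x: "x \<in> P"
    have xc: "x \<in> carrier G" using subgroup.mem_carrier[OF P(1) x] .
    obtain j where j: "ord x = p ^ j" using primepow_ord[OF fin p P(1) P(2) x] by blast
    have "x [^] (p ^ j) = \<one>" using pow_ord_eq_1[OF xc] j by simp
    thus "x \<in> psel G p" unfolding psel_def using xc by blast
  qed
  have finS: "finite (psel G p)" using fin psel_sub finite_subset by blast
  have "card P \<le> card (psel G p)" using card_mono[OF finS PS] .
  hence ce: "card P = card (psel G p)" using bound P(2) by simp
  hence PeS: "P = psel G p" using card_subset_eq[OF finS PS] by simp
  show "card (psel G p) = p ^ multiplicity p (order G)" using ce P(2) by simp
  show "psel G p \<lhd> G"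
  proof (rule normal_invI)
    show "subgroup (psel G p) G" using P(1) PeS by simp
    fix x h assume x: "x \<in> carrier G" and h: "h \<in> psel G p"
    then obtain k where hc: "h \<in> carrier G" and hk: "h [^] (p ^ k) = \<one>" unfolding psel_def by auto
    have "(x \<otimes> h \<otimes> inv x) [^] (p ^ k) = \<one>" using conj_pow[OF x hc] hk x by (simp add: cancel2 m_assoc)
    thus "x \<otimes> h \<otimes> inv x \<in> psel G p" unfolding psel_def using x hc by auto
  qed
qed

lemma elem_in_gen_psel:
  assumes fin: "finite (carrier G)"
  shows "g \<in> carrier G \<Longrightarrow> g \<in> generate G (\<Union>p\<in>{p. Factorial_Ring.prime p}. psel G p)"
proof (induction "ord g" arbitrary: g rule: less_induct)
  case less
  let ?S = "\<Union>p\<in>{p. Factorial_Ring.prime p}. psel G p"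
  have Ssub: "?S \<subseteq> carrier G" using psel_sub by blast
  have gc: "g \<in> carrier G" by fact
  define n where "n = ord g"
  have n1: "n \<ge> 1" using ord_ge_1[OF fin gc] n_def by simp
  show ?case
  proof (cases "n = 1")
    case True
    hence "g = \<one>" using ord_eq_1[OF gc] n_def by simp
    thus ?thesis by (simp add: generate.one)
  next
    case False
    then obtain p where p: "Factorial_Ring.prime p" "p dvd n" using prime_factor_nat by blast
    define a where "a = multiplicity p n"
    define m where "m = n div p ^ a"
    have n0: "n \<noteq> 0" using n1 by simp
    have pnu: "\<not> is_unit p" using p not_prime_unit by blast
    have pa: "p ^ a dvd n" using multiplicity_dvd[of p n] a_def by simp
    have nm: "n = p ^ a * m" using pa m_def by simp
    have ndvd: "\<not> p dvd m" using multiplicity_decompose[of n p] n0 pnu m_def a_def by simp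
    have gn: "g [^] n = \<one>" using pow_ord_eq_1[OF gc] n_def by simp
    show ?thesis
    proof (cases "m = 1")
      case True
      hence "g [^] (p ^ a) = \<one>" using gn nm by simp
      hence "g \<in> psel G p" unfolding psel_def using gc by blast
      thus ?thesis using p by (auto intro: generate.incl)
    next
      case False
      have m0: "m \<noteq> 0" using nm n0 by auto
      have a0: "a \<noteq> 0"
      proof
        assume "a = 0" hence "m = n" using nm by simp
        thus False using p ndvd by simp
      qed
      have p1: "p > 1" using p prime_gt_1_nat by blast
      have pa1: "p ^ a > 1" using one_less_power[OF p1] a0 by blast
      define v where "v = g [^] (p ^ a)"
      have vc: "v \<in> carrier G" using gc v_def by simp
      have ov: "ord v = m" using ord_pow[OF gc, of "p ^ a"] pa n_def m_def v_def p1 by simp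
      have "m < n" using nm pa1 m0 by simp
      hence vgen: "v \<in> generate G ?S" using less(1)[of v] vc ov n_def by simp
      obtain s t where st: "m * s = p ^ a * t + gcd m (p ^ a)" using bezout_nat[OF m0] by blast
      have "coprime m (p ^ a)" using prime_imp_coprime[OF p(1) ndvd] by (simp add: coprime_commute)
      hence st': "m * s = p ^ a * t + 1" using st by simp
      have e1: "g [^] (m * s) = v [^] t \<otimes> g"
        using st' gc v_def by (simp add: nat_pow_pow[symmetric] nat_pow_mult[symmetric])
      have "(g [^] (m * s)) [^] (p ^ a) = (g [^] n) [^] s"
        using gc nm by (simp add: nat_pow_pow mult.commute mult.left_commute mult.assoc)
      hence "(g [^] (m * s)) [^] (p ^ a) = \<one>" using gn by simp
      hence u: "g [^] (m * s) \<in> psel G p" unfolding psel_def using gc by auto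
      hence ugen: "g [^] (m * s) \<in> generate G ?S" using p by (auto intro: generate.incl)
      have sg: "subgroup (generate G ?S) G" using generate_is_subgroup[OF Ssub] .
      have "inv (v [^] t) \<in> generate G ?S"
        using generate_m_inv_closed[OF Ssub] sub_nat_pow_closed[OF sg vgen] by blast
      hence "inv (v [^] t) \<otimes> g [^] (m * s) \<in> generate G ?S" using ugen by (rule generate.eng)
      moreover have "inv (v [^] t) \<otimes> g [^] (m * s) = g" using e1 vc gc by (simp add: cancel1)
      ultimately show ?thesis by simp
    qed
  qed
qed

lemma psel_comm:
  assumes p: "Factorial_Ring.prime p" and q: "Factorial_Ring.prime q" and pq: "p \<noteq> q"
    and Np: "psel G p \<lhd> G" and Nq: "psel G q \<lhd> G"
    and x: "x \<in> psel G p" and y: "y \<in> psel G q"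
  shows "x \<otimes> y = y \<otimes> x"
proof -
  interpret P: normal "psel G p" G by (rule Np)
  interpret Q: normal "psel G q" G by (rule Nq)
  have xc: "x \<in> carrier G" and yc: "y \<in> carrier G" using x y psel_sub by auto
  define z where "z = x \<otimes> y \<otimes> inv x \<otimes> inv y"
  have zc: "z \<in> carrier G" using xc yc z_def by simp
  have "y \<otimes> inv x \<otimes> inv y \<in> psel G p" using P.inv_op_closed2[OF yc P.m_inv_closed[OF x]] .
  hence "x \<otimes> (y \<otimes> inv x \<otimes> inv y) \<in> psel G p" using P.m_closed x by blast
  hence zp: "z \<in> psel G p" using xc yc z_def by (simp add: m_assoc)
  have "x \<otimes> y \<otimes> inv x \<in> psel G q" using Q.inv_op_closed2[OF xc y] .
  hence "(x \<otimes> y \<otimes> inv x) \<otimes> inv y \<in> psel G q" using Q.m_closed Q.m_inv_closed[OF y] by blast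
  hence zq: "z \<in> psel G q" using z_def by simp
  obtain i where zi: "z [^] (p ^ i) = \<one>" using zp unfolding psel_def by auto
  obtain j where zj: "z [^] (q ^ j) = \<one>" using zq unfolding psel_def by auto
  have "ord z dvd p ^ i" "ord z dvd q ^ j" using zi zj pow_eq_id[OF zc] by auto
  moreover have "coprime (p ^ i) (q ^ j)" using primes_coprime[OF p q pq] by simp
  ultimately have "ord z = 1" by (metis coprime_common_divisor_nat)
  hence "z = \<one>" using ord_eq_1[OF zc] by simp
  thus ?thesis using comm_of_commutator_one[OF xc yc] z_def by simp
qed

lemma zs_transfer:
  assumes fin: "finite (carrier G)" and p: "Factorial_Ring.prime p"
    and Nall: "\<And>q. Factorial_Ring.prime q \<Longrightarrow> psel G q \<lhd> G"
  shows "zs (G\<lparr>carrier := psel G p\<rparr>) i \<subseteq> zs G i"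
proof (induction i)
  case 0 thus ?case by simp
next
  case (Suc i)
  let ?X = "G\<lparr>carrier := psel G p\<rparr>"
  let ?S = "\<Union>p\<in>{p. Factorial_Ring.prime p}. psel G p"
  interpret P: normal "psel G p" G by (rule Nall[OF p])
  interpret Z: normal "zs G i" G by (rule zs_normal[OF fin])
  show ?case
  proof
    fix x assume x: "x \<in> zs ?X (Suc i)"
    hence xP: "x \<in> psel G p" by simp
    have xc: "x \<in> carrier G" using xP psel_sub by blast
    have hx: "\<forall>g\<in>psel G p. x \<otimes> g \<otimes> inv x \<otimes> inv g \<in> zs G i"
    proof
      fix g assume g: "g \<in> psel G p"
      have "x \<otimes> g \<otimes> inv\<^bsub>?X\<^esub> x \<otimes> inv\<^bsub>?X\<^esub> g \<in> zs ?X i" using x g by simp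
      hence "x \<otimes> g \<otimes> inv x \<otimes> inv g \<in> zs ?X i"
        using m_inv_consistent[OF P.subgroup_axioms xP] m_inv_consistent[OF P.subgroup_axioms g] by simp
      thus "x \<otimes> g \<otimes> inv x \<otimes> inv g \<in> zs G i" using Suc by blast
    qed
    define W where "W = {h \<in> carrier G. x \<otimes> h \<otimes> inv x \<otimes> inv h \<in> zs G i}"
    have sW: "subgroup W G"
    proof (rule fin_closed_subgroup[OF fin])
      show "W \<subseteq> carrier G" unfolding W_def by auto
      show "\<one> \<in> W" unfolding W_def using xc Z.one_closed by simp
      fix h1 h2 assume h1: "h1 \<in> W" and h2: "h2 \<in> W"
      have c1: "h1 \<in> carrier G" and c2: "h2 \<in> carrier G" using h1 h2 W_def by auto
      have a: "x \<otimes> h1 \<otimes> inv x \<otimes> inv h1 \<in> zs G i" using h1 W_def by auto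
      have b: "x \<otimes> h2 \<otimes> inv x \<otimes> inv h2 \<in> zs G i" using h2 W_def by auto
      have b': "h1 \<otimes> (x \<otimes> h2 \<otimes> inv x \<otimes> inv h2) \<otimes> inv h1 \<in> zs G i" using Z.inv_op_closed2[OF c1 b] .
      have "x \<otimes> (h1 \<otimes> h2) \<otimes> inv x \<otimes> inv (h1 \<otimes> h2)
          = (x \<otimes> h1 \<otimes> inv x \<otimes> inv h1) \<otimes> (h1 \<otimes> (x \<otimes> h2 \<otimes> inv x \<otimes> inv h2) \<otimes> inv h1)"
        using xc c1 c2 by (simp add: m_assoc inv_mult_group cancel1)
      hence "x \<otimes> (h1 \<otimes> h2) \<otimes> inv x \<otimes> inv (h1 \<otimes> h2) \<in> zs G i" using a b' Z.m_closed by simp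
      thus "h1 \<otimes> h2 \<in> W" unfolding W_def using c1 c2 by simp
    qed
    have SW: "?S \<subseteq> W"
    proof
      fix g assume "g \<in> ?S"
      then obtain q where q: "Factorial_Ring.prime q" "g \<in> psel G q" by blast
      have gc: "g \<in> carrier G" using q psel_sub by blast
      show "g \<in> W"
      proof (cases "q = p")
        case True
        thus ?thesis using hx q gc unfolding W_def by auto
      next
        case False
        have "x \<otimes> g = g \<otimes> x" using psel_comm[OF p q(1) _ Nall[OF p] Nall[OF q(1)] xP q(2)] False by simp
        hence "x \<otimes> g \<otimes> inv x \<otimes> inv g = \<one>" using commutator_of_comm[OF xc gc] by simp
        thus ?thesis unfolding W_def using gc Z.one_closed by simp
      qed
    qed
    have "generate G ?S \<subseteq> W" using generate_subgroup_incl[OF SW sW] .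
    hence "carrier G \<subseteq> W" using elem_in_gen_psel[OF fin] by blast
    thus "x \<in> zs G (Suc i)" using xc unfolding W_def by auto
  qed
qed

lemma nilp_from_psel:
  assumes fin: "finite (carrier G)"
    and bound: "\<And>p. Factorial_Ring.prime p \<Longrightarrow> card (psel G p) \<le> p ^ multiplicity p (order G)"
  shows "nilpotent_group G"
proof -
  have Nall: "psel G q \<lhd> G" if q: "Factorial_Ring.prime q" for q
    using psel_sylow(1)[OF fin q bound[OF q]] .
  define N where "N = order G"
  let ?S = "\<Union>p\<in>{p. Factorial_Ring.prime p}. psel G p"
  have Ssub: "?S \<subseteq> zs G N"
  proof
    fix g assume "g \<in> ?S"
    then obtain p where p: "Factorial_Ring.prime p" "g \<in> psel G p" by blast
    let ?X = "G\<lparr>carrier := psel G p\<rparr>"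
    have sP: "subgroup (psel G p) G" using Nall[OF p(1)] normal_imp_subgroup by blast
    interpret X: group ?X using subgroup.subgroup_is_group[OF sP is_group] .
    have finX: "finite (carrier ?X)" using finite_subset[OF psel_sub fin] by simp
    have oX: "order ?X = p ^ multiplicity p (order G)"
      using psel_sylow(2)[OF fin p(1) bound[OF p(1)]] by (simp add: order_def)
    have top: "zs ?X (order ?X) = psel G p" using X.pgroup_zs_top[OF finX p(1) oX] by simp
    have "order ?X \<le> N" unfolding N_def order_def using card_mono[OF fin psel_sub] by simp
    hence "zs ?X (order ?X) \<subseteq> zs ?X N" by (rule X.zs_mono')
    hence "psel G p \<subseteq> zs G N" using top zs_transfer[OF fin p(1) Nall, of N] by blast
    thus "g \<in> zs G N" using p by blast
  qed
  interpret Z: normal "zs G N" G by (rule zs_normal[OF fin])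
  have "generate G ?S \<subseteq> zs G N" using generate_subgroup_incl[OF Ssub Z.subgroup_axioms] .
  hence "zs G N = carrier G" using elem_in_gen_psel[OF fin] zs_sub by blast
  thus ?thesis using zs_top_nilpotent[OF fin] by blast
qed

end

theorem lemma1:
  fixes G :: "('a, 'b) monoid_scheme" and H :: "('c, 'd) monoid_scheme"
  assumes "group G" and "finite (carrier G)" and "nilpotent_group G"
    and "group H" and "finite (carrier H)"
    and "epg_iso G H"
  shows "nilpotent_group H"
proof -
  obtain f where bij: "bij_betw f (carrier G) (carrier H)"
    and adj: "\<forall>x\<in>carrier G. \<forall>y\<in>carrier G. epg_adj G x y \<longleftrightarrow> epg_adj H (f x) (f y)"
    using assms(6) unfolding epg_iso_def by blast
  have oGH: "order G = order H" unfolding order_def using bij bij_betw_same_card by blast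
  interpret H: group H by fact
  show ?thesis
  proof (rule H.nilp_from_psel[OF assms(5)])
    fix p :: nat assume p: "Factorial_Ring.prime p"
    have "card (psel H p) = card (psel G p)"
      using psel_card_eq[OF assms(1) assms(4) assms(2) assms(5) bij adj] by simp
    also have "\<dots> \<le> p ^ multiplicity p (order G)"
      using nilp_psel_bound[OF assms(1) assms(2) assms(3) p] .
    finally show "card (psel H p) \<le> p ^ multiplicity p (order H)" using oGH by simp
  qed
qed

end
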